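(* Let $R$ be a uniform $L$-layered $1$-semifield$^\dagger$. Any polynomials $f,g,h\in R[\lambda]$ satisfy $$|\Re(f,gh)|\cong_\nu|\Re(f,g)|\,|\Re(f,h)|\quad\text{and}\quad |\Re(fg,h)|\cong_\nu|\Re(f,h)|\,|\Re(g,h)|.$$
   Context: Concretely, $R=R(L,\mathcal{G})$ with $L$ a totally ordered commutative semiring$^\dagger$ (semiring without necessarily a zero) and $\mathcal{G}$ a totally ordered abelian group; elements $x^{[\ell]}$ ($x\in\mathcal{G}$, layer $\ell$), $x^{[k]}y^{[\ell]}=(xy)^{[k\ell]}$, $x^{[k]}+y^{[\ell]}$ equal to $x^{[k]}$ if $x>y$, $y^{[\ell]}$ if $x<y$, $x^{[k+\ell]}$ if $x=y$; a zero element $\mathbb{0}_R$ is formally adjoined. $u\cong_\nu v$ means $u,v$ have the same $\mathcal{G}$-value. The layered permanent of an $N\times N$ matrix is $|A|=\sum_{\sigma\in S_N}\prod_i a_{i,\sigma(i)}$. For $f=\sum_{i=0}^m\alpha_i\lambda^i$, $A_n(f)$ is the $n\times(m+n)$ matrix whose $r$-th row is $(\mathbb{0},\dots,\mathbb{0},\alpha_0,\dots,\alpha_m,\mathbb{0},\dots)$ with $r-1$ leading zeros; the Sylvester matrix is $\Re(f,g)=\binom{A_n(f)}{A_m(g)}$ ($\deg f=m,\deg g=n\ge1$), and the layered resultant is $|\Re(f,g)|$; for constant $f=\alpha_0$ the resultant is $\alpha_0^n$, and symmetrically for constant $g$. *)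

theory Defs
  imports "HOL-Computational_Algebra.Polynomial" "HOL-Combinatorics.Permutations"
begin

text \<open>Layer semiring L: a totally ordered commutative semiring with 1 that need
not have a zero.\<close>

class lin_ord_comm_semiring_1 = comm_semiring + comm_monoid_mult + linorder +
  assumes add_right_mono_L: "a \<le> b \<Longrightarrow> a + c \<le> b + c"
  and mult_right_mono_L: "a \<le> b \<Longrightarrow> a * c \<le> b * c"

text \<open>The uniform layered structure R(L,G) with a formally adjoined zero.
  Lay x l stands for x^[l]. The totally ordered abelian group G is written
  additively (class linordered_ab_group_add), so the product x y of G is x + y
  and the unit of G is 0.\<close>

datatype ('g, 'l) layered = LZero | Lay 'g 'l

fun lay_add :: "('g::linorder, 'l::plus) layered \<Rightarrow> ('g, 'l) layered \<Rightarrow> ('g, 'l) layered" where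
  "lay_add LZero b = b"
| "lay_add (Lay x k) LZero = Lay x k"
| "lay_add (Lay x k) (Lay y l) =
     (if y < x then Lay x k else if x < y then Lay y l else Lay x (k + l))"

fun lay_mult :: "('g::plus, 'l::times) layered \<Rightarrow> ('g, 'l) layered \<Rightarrow> ('g, 'l) layered" where
  "lay_mult LZero b = LZero"
| "lay_mult (Lay x k) LZero = LZero"
| "lay_mult (Lay x k) (Lay y l) = Lay (x + y) (k * l)"

instantiation layered :: (linordered_ab_group_add, lin_ord_comm_semiring_1) comm_semiring_1
begin

definition zero_layered_def: "0 = LZero"
definition one_layered_def: "1 = Lay 0 1"
definition plus_layered_def: "a + b = lay_add a b"
definition times_layered_def: "a * b = lay_mult a b"

instance
proof
  fix a b c :: "('a, 'b) layered"
  show "a + b + c = a + (b + c)"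
    unfolding plus_layered_def
    by (cases a; cases b; cases c) (auto simp: add.assoc)
  show "a + b = b + a"
    unfolding plus_layered_def
    by (cases a; cases b) (auto simp: add.commute)
  show "0 + a = a"
    unfolding plus_layered_def zero_layered_def by simp
  show "a * b * c = a * (b * c)"
    unfolding times_layered_def
    by (cases a; cases b; cases c) (auto simp: add.assoc mult.assoc)
  show "a * b = b * a"
    unfolding times_layered_def
    by (cases a; cases b) (auto simp: add.commute mult.commute)
  show "1 * a = a"
    unfolding times_layered_def one_layered_def by (cases a) auto
  show "0 * a = 0"
    unfolding times_layered_def zero_layered_def by simp
  show "a * 0 = 0"
    unfolding times_layered_def zero_layered_def by (cases a) auto
  show "(a + b) * c = a * c + b * c"
    unfolding times_layered_def plus_layered_def
    by (cases a; cases b; cases c) (auto simp: distrib_right)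
  show "(0::('a, 'b) layered) \<noteq> 1"
    unfolding zero_layered_def one_layered_def by simp
qed

end

fun nu_val :: "('g, 'l) layered \<Rightarrow> 'g option" where
  "nu_val LZero = None"
| "nu_val (Lay x l) = Some x"

definition nu_equiv :: "('g, 'l) layered \<Rightarrow> ('g, 'l) layered \<Rightarrow> bool" (infix "\<cong>\<^sub>\<nu>" 50) where
  "u \<cong>\<^sub>\<nu> v \<longleftrightarrow> nu_val u = nu_val v"

definition permanent :: "nat \<Rightarrow> (nat \<Rightarrow> nat \<Rightarrow> 'a::comm_semiring_1) \<Rightarrow> 'a" where
  "permanent N A = (\<Sum>\<sigma> \<in> {\<sigma>. \<sigma> permutes {..<N}}. \<Prod>i<N. A i (\<sigma> i))"

definition sylvester :: "'a::comm_semiring_1 poly \<Rightarrow> 'a poly \<Rightarrow> nat \<Rightarrow> nat \<Rightarrow> 'a" where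
  "sylvester f g r j =
     (if r < degree g then (if r \<le> j then coeff f (j - r) else 0)
      else (let r' = r - degree g in if r' \<le> j then coeff g (j - r') else 0))"

definition layered_resultant :: "'a::comm_semiring_1 poly \<Rightarrow> 'a poly \<Rightarrow> 'a" where
  "layered_resultant f g =
     (if degree f = 0 then coeff f 0 ^ degree g
      else if degree g = 0 then coeff g 0 ^ degree f
      else permanent (degree f + degree g) (sylvester f g))"

end

theory Submission
  imports Defs
begin

instance layered :: (linordered_ab_group_add, lin_ord_comm_semiring_1) semiring_no_zero_divisors
proof
  fix a b :: "('a,'b) layered"
  assume "a \<noteq> 0" "b \<noteq> 0"
  then show "a * b \<noteq> 0"
    unfolding zero_layered_def times_layered_def by (cases a; cases b) auto
qed

instantiation layered :: (linorder, linorder) linorder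
begin
definition less_eq_layered_def:
  "a \<le> b \<longleftrightarrow> (case a of LZero \<Rightarrow> True | Lay x k \<Rightarrow>
      (case b of LZero \<Rightarrow> False | Lay y l \<Rightarrow> x < y \<or> (x = y \<and> k \<le> l)))"
definition less_layered_def: "(a::('a,'b) layered) < b \<longleftrightarrow> a \<le> b \<and> \<not> b \<le> a"
instance
proof
  fix a b c :: "('a,'b) layered"
  show "(a < b) = (a \<le> b \<and> \<not> b \<le> a)" by (simp add: less_layered_def)
  show "a \<le> a" unfolding less_eq_layered_def by (cases a) auto
  show "a \<le> b \<Longrightarrow> b \<le> c \<Longrightarrow> a \<le> c" unfolding less_eq_layered_def
    by (cases a; cases b; cases c) auto
  show "a \<le> b \<Longrightarrow> b \<le> a \<Longrightarrow> a = b" unfolding less_eq_layered_def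
    by (cases a; cases b) auto
  show "a \<le> b \<or> b \<le> a" unfolding less_eq_layered_def
    by (cases a; cases b) auto
qed
end

datatype one = One

instantiation one :: lin_ord_comm_semiring_1
begin
definition "(a::one) + b = One"
definition "(a::one) * b = One"
definition "(1::one) = One"
definition "(a::one) \<le> b \<longleftrightarrow> True"
definition "(a::one) < b \<longleftrightarrow> False"
instance
proof
  fix a b c :: one
  show "a + b + c = a + (b + c)" by (simp add: plus_one_def)
  show "a + b = b + a" by (simp add: plus_one_def)
  show "a * b * c = a * (b * c)" by (simp add: times_one_def)
  show "a * b = b * a" by (simp add: times_one_def)
  show "(a + b) * c = a * c + b * c" by (simp add: times_one_def plus_one_def)
  show "1 * a = a" by (cases a) (simp add: times_one_def one_one_def)
  show "(a < b) = (a \<le> b \<and> \<not> b \<le> a)" by (simp add: less_eq_one_def less_one_def)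
  show "a \<le> a" by (simp add: less_eq_one_def)
  show "a \<le> b \<Longrightarrow> b \<le> c \<Longrightarrow> a \<le> c" by (simp add: less_eq_one_def)
  show "a \<le> b \<Longrightarrow> b \<le> a \<Longrightarrow> a = b" by (cases a; cases b) auto
  show "a \<le> b \<or> b \<le> a" by (simp add: less_eq_one_def)
  show "a \<le> b \<Longrightarrow> a + c \<le> b + c" by (simp add: less_eq_one_def)
  show "a \<le> b \<Longrightarrow> a * c \<le> b * c" by (simp add: less_eq_one_def)
qed
end

type_synonym 'g trop = "('g, one) layered"

lemma one_eq_simp[simp]: "((x::one) = y) = True" by (cases x; cases y) auto
lemma one_le_simp[simp]: "(x::one) \<le> y" by (simp add: less_eq_one_def)
lemma one_less_simp[simp]: "\<not> (x::one) < y" by (simp add: less_one_def)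

instance layered :: (linordered_ab_group_add, lin_ord_comm_semiring_1) semiring_1_no_zero_divisors ..


lemma trop_add_max: "(a::'g::linordered_ab_group_add trop) + b = max a b"
  unfolding plus_layered_def max_def less_eq_layered_def
  by (cases a; cases b) auto

lemma trop_zero_le[simp]: "(0::'g::linordered_ab_group_add trop) \<le> a"
  unfolding zero_layered_def less_eq_layered_def by simp

lemma trop_le_zero_iff[simp]: "(a::'g::linordered_ab_group_add trop) \<le> 0 \<longleftrightarrow> a = 0"
  unfolding zero_layered_def less_eq_layered_def by (cases a) auto

lemma trop_mult_mono: "(a::'g::linordered_ab_group_add trop) \<le> b \<Longrightarrow> a * c \<le> b * c"
  unfolding times_layered_def less_eq_layered_def
  by (cases a; cases b; cases c) auto

lemma trop_mult_mono': "(a::'g::linordered_ab_group_add trop) \<le> b \<Longrightarrow> c * a \<le> c * b"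
  using trop_mult_mono[of a b c] by (simp add: mult.commute)

lemma trop_mult_mono2: "(a::'g::linordered_ab_group_add trop) \<le> b \<Longrightarrow> c \<le> d \<Longrightarrow> a * c \<le> b * d"
  by (meson order_trans trop_mult_mono trop_mult_mono')

lemma trop_mult_strict: "(a::'g::linordered_ab_group_add trop) < b \<Longrightarrow> c \<le> d \<Longrightarrow> d \<noteq> 0 \<Longrightarrow> a * c < b * d"
  unfolding times_layered_def less_layered_def less_eq_layered_def zero_layered_def
  apply (cases a; cases b; cases c; cases d)
  apply (auto simp: add_strict_mono add_less_le_mono add_le_less_mono)
  apply (metis add_strict_mono order_less_asym order_less_irrefl)+
  done

lemma trop_power_mono: "(a::'g::linordered_ab_group_add trop) \<le> b \<Longrightarrow> a ^ k \<le> b ^ k"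
  by (induction k) (auto intro: trop_mult_mono2)

lemma trop_power_strict: "(a::'g::linordered_ab_group_add trop) < b \<Longrightarrow> k > 0 \<Longrightarrow> a ^ k < b ^ k"
proof (induction k)
  case 0 then show ?case by simp
next
  case (Suc k)
  have bnz: "b \<noteq> 0" using Suc.prems(1) trop_zero_le[of a] by (auto simp: less_le_not_le)
  show ?case
  proof (cases "k = 0")
    case True then show ?thesis using Suc by simp
  next
    case False
    then have "a ^ k < b ^ k" using Suc by simp
    then have "a ^ k \<le> b ^ k" by simp
    moreover have "b ^ k \<noteq> 0" using bnz by simp
    ultimately have "a * a ^ k < b * b ^ k" using trop_mult_strict[OF Suc.prems(1)] by blast
    then show ?thesis by simp
  qed
qed

lemma trop_power_cancel: "k > 0 \<Longrightarrow> (a::'g::linordered_ab_group_add trop) ^ k \<le> b ^ k \<Longrightarrow> a \<le> b"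
  using trop_power_strict[of b a k] by (meson not_le)

lemma trop_power_inj: "k > 0 \<Longrightarrow> (a::'g::linordered_ab_group_add trop) ^ k = b ^ k \<Longrightarrow> a = b"
  using trop_power_cancel[of k a b] trop_power_cancel[of k b a] by auto

lemma trop_mult_cancel: "c \<noteq> 0 \<Longrightarrow> (a::'g::linordered_ab_group_add trop) * c \<le> b * c \<Longrightarrow> a \<le> b"
  using trop_mult_strict[of b a c c] by (meson not_le order_refl)

fun tinv :: "'g::linordered_ab_group_add trop \<Rightarrow> 'g trop" where
  "tinv LZero = LZero" | "tinv (Lay x u) = Lay (- x) u"

lemma tinv_mult: "c \<noteq> 0 \<Longrightarrow> c * tinv c = 1"
  unfolding times_layered_def one_layered_def zero_layered_def
  by (cases c) (auto simp: one_one_def)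

lemma trop_sum_upper: "finite A \<Longrightarrow> x \<in> A \<Longrightarrow> (f x :: 'g::linordered_ab_group_add trop) \<le> sum f A"
proof (induction A rule: finite_induct)
  case empty then show ?case by simp
next
  case (insert y A)
  then show ?case by (auto simp: trop_add_max le_max_iff_disj)
qed

lemma trop_sum_least: "(\<And>x. x \<in> A \<Longrightarrow> (f x :: 'g::linordered_ab_group_add trop) \<le> c) \<Longrightarrow> sum f A \<le> c"
proof (induction A rule: infinite_finite_induct)
  case (infinite A) then show ?case by simp
next
  case empty then show ?case by simp
next
  case (insert y A)
  then show ?case by (auto simp: trop_add_max)
qed

lemma trop_sum_attained: "finite A \<Longrightarrow> A \<noteq> {} \<Longrightarrow> \<exists>x\<in>A. sum f A = (f x :: 'g::linordered_ab_group_add trop)"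
proof (induction A rule: finite_induct)
  case empty then show ?case by simp
next
  case (insert y A)
  show ?case
  proof (cases "A = {}")
    case True then show ?thesis by simp
  next
    case False
    then obtain x where "x \<in> A" "sum f A = f x" using insert by auto
    then show ?thesis using insert by (auto simp: trop_add_max max_def)
  qed
qed

lemma trop_prod_mono: "(\<And>i. i \<in> A \<Longrightarrow> (f i :: 'g::linordered_ab_group_add trop) \<le> g i) \<Longrightarrow> prod f A \<le> prod g A"
proof (induction A rule: infinite_finite_induct)
  case (infinite A) then show ?case by simp
next
  case empty then show ?case by simp
next
  case (insert y A)
  then show ?case by (auto intro: trop_mult_mono2)
qed


locale srhom =
  fixes h :: "'a::comm_semiring_1 \<Rightarrow> 'b::comm_semiring_1"
  assumes h0: "h 0 = 0" and h1: "h 1 = 1"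
    and hadd: "h (a + b) = h a + h b" and hmul: "h (a * b) = h a * h b"
    and hnz: "h a = 0 \<Longrightarrow> a = 0"
begin

lemma hsum: "h (sum f A) = sum (\<lambda>x. h (f x)) A"
  by (induction A rule: infinite_finite_induct) (auto simp: h0 hadd)

lemma hprod: "h (prod f A) = prod (\<lambda>x. h (f x)) A"
  by (induction A rule: infinite_finite_induct) (auto simp: h1 hmul)

lemma hpow: "h (a ^ k) = h a ^ k"
  by (induction k) (auto simp: h1 hmul)

lemma hcoeff: "coeff (map_poly h p) i = h (coeff p i)"
  by (simp add: coeff_map_poly h0)

lemma hdegree: "degree (map_poly h p) = degree p"
  by (rule degree_map_poly) (use hnz in auto)

lemma hpoly_mult: "map_poly h (p * q) = map_poly h p * map_poly h q"
  by (rule poly_eqI) (simp add: hcoeff coeff_mult hsum hmul)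

lemma hpoly_nz: "p \<noteq> 0 \<Longrightarrow> map_poly h p \<noteq> 0"
proof -
  assume "p \<noteq> 0"
  then have "coeff p (degree p) \<noteq> 0" by simp
  then have "coeff (map_poly h p) (degree p) \<noteq> 0" using hnz by (metis hcoeff)
  then show ?thesis by auto
qed

lemma hsylvester: "sylvester (map_poly h f) (map_poly h g) r j = h (sylvester f g r j)"
  by (simp add: sylvester_def hdegree hcoeff h0 Let_def)

lemma hpermanent: "h (permanent N A) = permanent N (\<lambda>i j. h (A i j))"
  by (simp add: permanent_def hsum hprod)

lemma hresultant: "layered_resultant (map_poly h f) (map_poly h g) = h (layered_resultant f g)"
proof -
  have "sylvester (map_poly h f) (map_poly h g) = (\<lambda>i j. h (sylvester f g i j))"
    by (rule ext, rule ext, rule hsylvester)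
  then show ?thesis by (simp add: layered_resultant_def hdegree hcoeff hpow hpermanent)
qed

end

fun phi :: "('g::linordered_ab_group_add, 'l::lin_ord_comm_semiring_1) layered \<Rightarrow> 'g trop" where
  "phi LZero = LZero" | "phi (Lay x k) = Lay x One"

lemma phi_hom: "srhom phi"
proof
  fix a b :: "('a::linordered_ab_group_add, 'b::lin_ord_comm_semiring_1) layered"
  show "phi 0 = 0" by (simp add: zero_layered_def)
  show "phi 1 = 1" by (simp add: one_layered_def)
  show "phi (a + b) = phi a + phi b" unfolding plus_layered_def by (cases a; cases b) auto
  show "phi (a * b) = phi a * phi b" unfolding times_layered_def by (cases a; cases b) auto
  show "phi a = 0 \<Longrightarrow> a = 0" unfolding zero_layered_def by (cases a) auto
qed

lemma nu_equiv_phi: "u \<cong>\<^sub>\<nu> v \<longleftrightarrow> phi u = phi v"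
  unfolding nu_equiv_def by (cases u; cases v) auto

lemma psi_hom: "d > 0 \<Longrightarrow> srhom (\<lambda>a::'g::linordered_ab_group_add trop. a ^ d)"
proof
  fix a b :: "'g trop"
  assume d: "d > 0"
  show "(0::'g trop) ^ d = 0" using d by simp
  show "(1::'g trop) ^ d = 1" by simp
  show "(a + b) ^ d = a ^ d + b ^ d"
    by (simp add: trop_add_max max_def trop_power_mono)
       (metis nle_le order_antisym trop_power_mono)
  show "(a * b) ^ d = a ^ d * b ^ d" by (simp add: power_mult_distrib)
  show "a ^ d = 0 \<Longrightarrow> a = 0" by simp
qed


lemma permanent_rows:
  assumes rho: "\<rho> permutes {..<N}"
  shows "permanent N (\<lambda>i j. A (\<rho> i) j) = permanent N (A::nat\<Rightarrow>nat\<Rightarrow>'a::comm_semiring_1)"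
proof -
  let ?P = "{\<sigma>. \<sigma> permutes {..<N}}"
  have bij: "bij_betw \<rho> {..<N} {..<N}" using rho by (rule permutes_imp_bij)
  have step1: "(\<Prod>i<N. A (\<rho> i) (\<sigma> i)) = (\<Prod>k<N. A k (\<sigma> (inv \<rho> k)))" for \<sigma>
  proof -
    have "(\<Prod>k<N. A k (\<sigma> (inv \<rho> k))) = (\<Prod>i<N. A (\<rho> i) (\<sigma> (inv \<rho> (\<rho> i))))"
      by (rule prod.reindex_bij_betw[OF bij, symmetric])
    also have "\<dots> = (\<Prod>i<N. A (\<rho> i) (\<sigma> i))"
      using permutes_inverses(2)[OF rho] by simp
    finally show ?thesis by simp
  qed
  have bij2: "bij_betw (\<lambda>\<sigma>. \<sigma> \<circ> inv \<rho>) ?P ?P"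
  proof (rule bij_betw_byWitness[where f'="\<lambda>\<tau>. \<tau> \<circ> \<rho>"])
    show "\<forall>a\<in>?P. a \<circ> inv \<rho> \<circ> \<rho> = a"
      using permutes_inverses(2)[OF rho] by (auto simp: fun_eq_iff)
    show "\<forall>a\<in>?P. a \<circ> \<rho> \<circ> inv \<rho> = a"
      using permutes_inverses(1)[OF rho] by (auto simp: fun_eq_iff)
    show "(\<lambda>\<sigma>. \<sigma> \<circ> inv \<rho>) ` ?P \<subseteq> ?P"
      using permutes_compose permutes_inv[OF rho] by blast
    show "(\<lambda>\<tau>. \<tau> \<circ> \<rho>) ` ?P \<subseteq> ?P"
      using permutes_compose rho by blast
  qed
  have "permanent N (\<lambda>i j. A (\<rho> i) j) = (\<Sum>\<sigma>\<in>?P. \<Prod>k<N. A k ((\<sigma> \<circ> inv \<rho>) k))"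
    unfolding permanent_def using step1 by simp
  also have "\<dots> = (\<Sum>\<tau>\<in>?P. \<Prod>k<N. A k (\<tau> k))"
    using sum.reindex_bij_betw[OF bij2, of "\<lambda>\<tau>. \<Prod>k<N. A k (\<tau> k)"] by simp
  finally show ?thesis unfolding permanent_def .
qed

lemma resultant_sym:
  fixes f g :: "'a::comm_semiring_1 poly"
  shows "layered_resultant f g = layered_resultant g f"
proof -
  let ?m = "degree f" and ?n = "degree g"
  show ?thesis
  proof (cases "?m = 0 \<or> ?n = 0")
    case True then show ?thesis by (auto simp: layered_resultant_def)
  next
    case False
    define \<rho> where "\<rho> r = (if r < ?m then r + ?n else if r < ?m + ?n then r - ?m else r)" for r
    have rho: "\<rho> permutes {..<?n + ?m}"
    proof (rule bij_imp_permutes)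
      show "\<rho> x = x" if "x \<notin> {..<?n + ?m}" for x using that by (auto simp: \<rho>_def)
      show "bij_betw \<rho> {..<?n + ?m} {..<?n + ?m}"
      proof (rule bij_betw_byWitness[where f'="\<lambda>r. if r < ?n then r + ?m else r - ?n"])
        show "\<forall>a\<in>{..<?n + ?m}. (if \<rho> a < ?n then \<rho> a + ?m else \<rho> a - ?n) = a"
          by (auto simp: \<rho>_def)
        show "\<forall>a\<in>{..<?n + ?m}. \<rho> (if a < ?n then a + ?m else a - ?n) = a"
          by (auto simp: \<rho>_def)
        show "\<rho> ` {..<?n + ?m} \<subseteq> {..<?n + ?m}" by (auto simp: \<rho>_def)
        show "(\<lambda>r. if r < ?n then r + ?m else r - ?n) ` {..<?n + ?m} \<subseteq> {..<?n + ?m}" by auto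
      qed
    qed
    have eq: "sylvester g f r j = sylvester f g (\<rho> r) j" if "r < ?n + ?m" for r j
      using that by (auto simp: sylvester_def \<rho>_def Let_def)
    have "permanent (?n + ?m) (sylvester g f) = permanent (?n + ?m) (\<lambda>r j. sylvester f g (\<rho> r) j)"
      unfolding permanent_def
      by (intro sum.cong refl prod.cong) (auto simp: eq permutes_def)
    also have "\<dots> = permanent (?n + ?m) (sylvester f g)" by (rule permanent_rows[OF rho])
    finally show ?thesis using False by (simp add: layered_resultant_def add.commute)
  qed
qed


fun E :: "(nat \<Rightarrow> 'a::comm_semiring_1) \<Rightarrow> nat \<Rightarrow> 'a" where
  "E \<alpha> 0 = 1" | "E \<alpha> (Suc j) = E \<alpha> j * \<alpha> (Suc j)"

lemma E_add: "E \<alpha> (t + j) = E \<alpha> t * E (\<lambda>i. \<alpha> (t + i)) j"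
  by (induction j) (auto simp: mult.assoc)

lemma E_cong: "(\<And>i. 1 \<le> i \<Longrightarrow> i \<le> j \<Longrightarrow> \<alpha> i = \<beta> i) \<Longrightarrow> E \<alpha> j = E \<beta> j"
  by (induction j) auto

lemma E_const: "(\<And>i. 1 \<le> i \<Longrightarrow> i \<le> j \<Longrightarrow> \<alpha> i = x) \<Longrightarrow> E \<alpha> j = x ^ j"
  by (induction j) (auto simp: mult.commute)

lemma E_zero: "j \<ge> 1 \<Longrightarrow> E (\<lambda>_. 0) j = 0"
  by (cases j) auto

definition rootsys :: "nat \<Rightarrow> (nat \<Rightarrow> 'g::linordered_ab_group_add trop) \<Rightarrow> (nat \<Rightarrow> 'g trop) \<Rightarrow> bool" where
  "rootsys m c \<alpha> \<longleftrightarrow> (\<forall>i. 1 \<le> i \<longrightarrow> i < m \<longrightarrow> \<alpha> (Suc i) \<le> \<alpha> i) \<and> \<alpha> (Suc m) = 0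
   \<and> (\<forall>a\<le>m. c a \<le> c m * E \<alpha> (m - a))
   \<and> (\<forall>a\<le>m. (a = m \<or> \<alpha> (m - a) \<noteq> \<alpha> (Suc (m - a))) \<longrightarrow> c a = c m * E \<alpha> (m - a))
   \<and> (\<forall>B. (\<forall>a<m. c a \<le> c m * B ^ (m - a)) \<longrightarrow> 1 \<le> m \<longrightarrow> \<alpha> 1 \<le> B)"

lemma roots_exist:
  fixes c :: "nat \<Rightarrow> 'g::linordered_ab_group_add trop"
  assumes "c m \<noteq> 0" and d: "d > 0" and "\<forall>k\<in>{1..m}. k dvd d" and ys: "\<forall>a. \<exists>y. c a = y ^ d"
  shows "\<exists>\<alpha>. rootsys m c \<alpha>"
  using assms(1,3)
proof (induction m rule: less_induct)
  case (less m)
  show ?case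
  proof (cases "\<exists>a<m. c a \<noteq> 0")
    case False
    define \<alpha> where "\<alpha> = (\<lambda>_::nat. 0::'g trop)"
    have "rootsys m c \<alpha>"
      unfolding rootsys_def
    proof (intro conjI allI impI)
      show "\<alpha> (Suc i) \<le> \<alpha> i" for i by (simp add: \<alpha>_def)
      show "\<alpha> (Suc m) = 0" by (simp add: \<alpha>_def)
      show "c a \<le> c m * E \<alpha> (m - a)" if "a \<le> m" for a
        using False that by (cases "a = m") auto
      show "c a = c m * E \<alpha> (m - a)" if "a \<le> m" "a = m \<or> \<alpha> (m - a) \<noteq> \<alpha> (Suc (m - a))" for a
        using that by (auto simp: \<alpha>_def)
      show "\<alpha> 1 \<le> B" for B by (simp add: \<alpha>_def)
    qed
    then show ?thesis by blast
  next
    case True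
    define y where "y a = (SOME y. c a = y ^ d)" for a
    have cy: "c a = y a ^ d" for a using ys unfolding y_def by (metis (mono_tags) someI_ex)
    have ym: "y m \<noteq> 0" using less.prems(1) cy[of m] d by auto
    define \<rho> where "\<rho> a = (y a * tinv (y m)) ^ (d div (m - a))" for a
    have crho: "c m * \<rho> a ^ (m - a) = c a" if "a < m" for a
    proof -
      have dv: "(m - a) dvd d" using less.prems(2) that by auto
      have "\<rho> a ^ (m - a) = (y a * tinv (y m)) ^ d"
        unfolding \<rho>_def power_mult[symmetric] using dv by simp
      then have "c m * \<rho> a ^ (m - a) = (y m * tinv (y m)) ^ d * y a ^ d"
        by (simp add: cy power_mult_distrib mult_ac)
      then show ?thesis using tinv_mult[OF ym] cy by simp
    qed
    define A where "A = {a. a < m \<and> c a \<noteq> 0}"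
    have Afin: "finite A" and Ane: "A \<noteq> {}" using True by (auto simp: A_def)
    define rmax where "rmax = Max (\<rho> ` A)"
    have "rmax \<in> \<rho> ` A" unfolding rmax_def using Afin Ane by (intro Max_in) auto
    then obtain as where as: "as \<in> A" "\<rho> as = rmax" by auto
    have asm: "as < m" "c as \<noteq> 0" using as by (auto simp: A_def)
    have rle: "\<rho> a \<le> rmax" if "a \<in> A" for a
      unfolding rmax_def using Afin that by auto
    have key: "c a \<le> c m * rmax ^ (m - a)" if "a < m" for a
    proof (cases "c a = 0")
      case True then show ?thesis by simp
    next
      case False
      then have "a \<in> A" using that by (auto simp: A_def)
      then have "\<rho> a ^ (m - a) \<le> rmax ^ (m - a)" using rle trop_power_mono by blast
      then have "c m * \<rho> a ^ (m - a) \<le> c m * rmax ^ (m - a)" by (rule trop_mult_mono')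
      then show ?thesis using crho[OF that] by simp
    qed
    have cas: "c as = c m * rmax ^ (m - as)" using crho[OF asm(1)] as(2) by simp
    define t where "t = m - as"
    have t1: "1 \<le> t" and tm: "t \<le> m" and mt: "m = t + as" using asm(1) by (auto simp: t_def)
    obtain \<alpha>' where ih: "rootsys as c \<alpha>'"
      using less.IH[OF asm(1) asm(2)] less.prems(2) asm(1) by auto
    note ih' = ih[unfolded rootsys_def]
    define \<alpha> where "\<alpha> i = (if i \<le> t then rmax else \<alpha>' (i - t))" for i
    have Eshift: "E \<alpha> (t + j) = rmax ^ t * E \<alpha>' j" for j
    proof -
      have "E \<alpha> (t + j) = E \<alpha> t * E (\<lambda>i. \<alpha> (t + i)) j" by (rule E_add)
      also have "E \<alpha> t = rmax ^ t" by (rule E_const) (auto simp: \<alpha>_def)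
      also have "E (\<lambda>i. \<alpha> (t + i)) j = E \<alpha>' j" by (rule E_cong) (auto simp: \<alpha>_def)
      finally show ?thesis .
    qed
    have Elow: "E \<alpha> j = rmax ^ j" if "j \<le> t" for j
      by (rule E_const) (use that in \<open>auto simp: \<alpha>_def\<close>)
    have "rootsys m c \<alpha>"
      unfolding rootsys_def
    proof (intro conjI allI impI)
      fix i assume i: "1 \<le> i" "i < m"
      show "\<alpha> (Suc i) \<le> \<alpha> i"
      proof (cases "i < t")
        case True then show ?thesis by (simp add: \<alpha>_def)
      next
        case False
        show ?thesis
        proof (cases "i = t")
          case True
          have as1: "1 \<le> as" using i True mt by simp
          have "\<forall>a<as. c a \<le> c as * rmax ^ (as - a)"
          proof (intro allI impI)
            fix a assume "a < as"
            then have "c a \<le> c m * rmax ^ (m - a)" using key asm(1) by simp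
            also have "m - a = t + (as - a)" using \<open>a < as\<close> mt by simp
            finally show "c a \<le> c as * rmax ^ (as - a)" by (simp add: cas power_add mult_ac t_def)
          qed
          then have "\<alpha>' 1 \<le> rmax" using ih' as1 by blast
          then show ?thesis using True by (simp add: \<alpha>_def)
        next
          case False
          then have "t < i" using \<open>\<not> i < t\<close> by simp
          then have "\<alpha>' (Suc (i - t)) \<le> \<alpha>' (i - t)" using ih' i mt by auto
          then show ?thesis using \<open>t < i\<close> by (simp add: \<alpha>_def Suc_diff_le)
        qed
      qed
    next
      show "\<alpha> (Suc m) = 0" using ih' mt by (simp add: \<alpha>_def)
    next
      fix a assume a: "a \<le> m"
      show "c a \<le> c m * E \<alpha> (m - a)"
      proof (cases "as \<le> a")
        case True
        then have "E \<alpha> (m - a) = rmax ^ (m - a)" using Elow mt by simp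
        then show ?thesis using key[of a] a by (cases "a = m") auto
      next
        case False
        then have "m - a = t + (as - a)" using mt by simp
        then have "E \<alpha> (m - a) = rmax ^ t * E \<alpha>' (as - a)" using Eshift by simp
        moreover have "c a \<le> c as * E \<alpha>' (as - a)" using ih' False by auto
        ultimately show ?thesis by (simp add: cas mult_ac t_def)
      qed
    next
      fix a assume a: "a \<le> m" and pre: "a = m \<or> \<alpha> (m - a) \<noteq> \<alpha> (Suc (m - a))"
      show "c a = c m * E \<alpha> (m - a)"
      proof (cases "a = m")
        case True then show ?thesis by simp
      next
        case False
        with pre have pre': "\<alpha> (m - a) \<noteq> \<alpha> (Suc (m - a))" by simp
        show ?thesis
        proof (cases "as \<le> a")
          case True
          show ?thesis
          proof (cases "a = as")
            case True then show ?thesis using cas Elow t_def by simp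
          next
            case False
            then have "Suc (m - a) \<le> t" using True \<open>a \<noteq> m\<close> a mt by simp
            then show ?thesis using pre' by (simp add: \<alpha>_def)
          qed
        next
          case False
          then have mta: "m - a = t + (as - a)" using mt by simp
          have nle: "\<not> m - a \<le> t" "\<not> Suc (m - a) \<le> t" using mta False by linarith+
          have e1: "\<alpha> (m - a) = \<alpha>' (as - a)"
          proof -
            have "\<alpha> (m - a) = \<alpha>' (m - a - t)" using nle unfolding \<alpha>_def by simp
            also have "m - a - t = as - a" using mta by simp
            finally show ?thesis .
          qed
          have e2: "\<alpha> (Suc (m - a)) = \<alpha>' (Suc (as - a))"
          proof -
            have "\<alpha> (Suc (m - a)) = \<alpha>' (Suc (m - a) - t)" using nle unfolding \<alpha>_def by simp
            also have "Suc (m - a) - t = Suc (as - a)" using mta by simp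
            finally show ?thesis .
          qed
          have "\<alpha>' (as - a) \<noteq> \<alpha>' (Suc (as - a))"
            using pre' e1 e2 by simp
          then have "c a = c as * E \<alpha>' (as - a)" using ih' False by auto
          moreover have "E \<alpha> (m - a) = rmax ^ t * E \<alpha>' (as - a)" using Eshift mta by simp
          ultimately show ?thesis by (simp add: cas mult_ac t_def)
        qed
      qed
    next
      fix B assume B: "\<forall>a<m. c a \<le> c m * B ^ (m - a)"
      have "c m * rmax ^ t \<le> c m * B ^ t" using B[rule_format, OF asm(1)] cas by (simp add: t_def)
      then have "rmax ^ t * c m \<le> B ^ t * c m" by (simp add: mult.commute)
      then have "rmax ^ t \<le> B ^ t" using trop_mult_cancel less.prems(1) by blast
      then have "rmax \<le> B" using trop_power_cancel[of t rmax B] t1 by simp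
      then show "\<alpha> 1 \<le> B" using t1 by (simp add: \<alpha>_def)
    qed
    then show ?thesis by blast
  qed
qed


lemma sum_distinct_bound:
  "finite A \<Longrightarrow> A \<subseteq> {..<k} \<Longrightarrow> 2 * int (\<Sum>A) \<le> int (card A) * (2 * int k - int (card A) - 1)"
proof (induction k arbitrary: A)
  case 0 then show ?case by simp
next
  case (Suc k)
  show ?case
  proof (cases "k \<in> A")
    case True
    let ?B = "A - {k}"
    have B: "finite ?B" "?B \<subseteq> {..<k}" using Suc.prems by auto
    have IH: "2 * int (\<Sum>?B) \<le> int (card ?B) * (2 * int k - int (card ?B) - 1)" using Suc.IH[OF B] .
    have cB: "card ?B = card A - 1" using True Suc.prems(1) by auto
    have "card A > 0" using True Suc.prems(1) by (auto simp: card_gt_0_iff)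
    then have cA: "card A \<ge> 1" by simp
    have sA: "\<Sum>A = k + \<Sum>?B" using True Suc.prems(1) by (simp add: sum.remove)
    have cBk: "card ?B \<le> k" using B card_mono[OF _ B(2)] by simp
    define j where "j = card A"
    have "2 * int (\<Sum>A) = 2 * int k + 2 * int (\<Sum>?B)" using sA by simp
    also have "\<dots> \<le> 2 * int k + int (j - 1) * (2 * int k - int (j - 1) - 1)" using IH cB j_def by simp
    also have "\<dots> = int j * (2 * int (Suc k) - int j - 1)"
      using cA unfolding j_def[symmetric] by (simp add: of_nat_diff algebra_simps)
    finally show ?thesis by (simp add: j_def)
  next
    case False
    then have B: "A \<subseteq> {..<k}" using Suc.prems(2) by (auto simp: subset_iff less_Suc_eq)
    have IH: "2 * int (\<Sum>A) \<le> int (card A) * (2 * int k - int (card A) - 1)" using Suc.IH[OF Suc.prems(1) B] .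
    have "int (card A) * (2 * int k - int (card A) - 1) \<le> int (card A) * (2 * int (Suc k) - int (card A) - 1)"
      by (intro mult_left_mono) auto
    then show ?thesis using IH by linarith
  qed
qed

lemma rank_bij:
  fixes h :: "'a \<Rightarrow> nat"
  assumes fin: "finite S" and inj: "inj_on h S"
  shows "bij_betw (\<lambda>x. card {y\<in>S. h x \<le> h y}) S {1..card S}"
proof -
  let ?rk = "\<lambda>x. card {y\<in>S. h x \<le> h y}"
  have into: "?rk ` S \<subseteq> {1..card S}"
  proof
    fix z assume "z \<in> ?rk ` S"
    then obtain x where x: "x \<in> S" "z = ?rk x" by auto
    have "x \<in> {y\<in>S. h x \<le> h y}" using x by simp
    moreover have "finite {y\<in>S. h x \<le> h y}" using fin by simp
    ultimately have "card {y\<in>S. h x \<le> h y} > 0" by (auto simp: card_gt_0_iff)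
    then have "1 \<le> z" using x by simp
    moreover have "z \<le> card S" using x fin by (auto intro: card_mono)
    ultimately show "z \<in> {1..card S}" by simp
  qed
  have injr: "inj_on ?rk S"
  proof (rule inj_onI)
    fix x y assume xy: "x \<in> S" "y \<in> S" "?rk x = ?rk y"
    show "x = y"
    proof (rule ccontr)
      assume "x \<noteq> y"
      then have "h x \<noteq> h y" using inj xy by (auto dest: inj_onD)
      then consider "h x < h y" | "h y < h x" by linarith
      then show False
      proof cases
        case 1
        have "{z\<in>S. h y \<le> h z} \<subseteq> {z\<in>S. h x \<le> h z}" using 1 by auto
        moreover have "x \<in> {z\<in>S. h x \<le> h z}" "x \<notin> {z\<in>S. h y \<le> h z}" using 1 xy by auto
        ultimately have "{z\<in>S. h y \<le> h z} \<subset> {z\<in>S. h x \<le> h z}" by blast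
        then have "?rk y < ?rk x" using fin by (intro psubset_card_mono) auto
        then show False using xy by simp
      next
        case 2
        have "{z\<in>S. h x \<le> h z} \<subseteq> {z\<in>S. h y \<le> h z}" using 2 by auto
        moreover have "y \<in> {z\<in>S. h y \<le> h z}" "y \<notin> {z\<in>S. h x \<le> h z}" using 2 xy by auto
        ultimately have "{z\<in>S. h x \<le> h z} \<subset> {z\<in>S. h y \<le> h z}" by blast
        then have "?rk x < ?rk y" using fin by (intro psubset_card_mono) auto
        then show False using xy by simp
      qed
    qed
  qed
  have "card (?rk ` S) = card {1..card S}" using card_image[OF injr] by simp
  then have "?rk ` S = {1..card S}" using into by (intro card_subset_eq) auto
  then show ?thesis using injr by (simp add: bij_betw_def)
qed

lemma downclosed_eq:
  fixes D :: "nat set"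
  assumes "finite D" "\<And>x y. x \<in> D \<Longrightarrow> y \<le> x \<Longrightarrow> y \<in> D"
  shows "D = {..<card D}"
proof (cases "D = {}")
  case True then show ?thesis by simp
next
  case False
  define M where "M = Max D"
  have "M \<in> D" using assms False by (simp add: M_def)
  have "D = {..M}"
  proof
    show "D \<subseteq> {..M}" using assms(1) by (auto simp: M_def)
    show "{..M} \<subseteq> D" using \<open>M \<in> D\<close> assms(2) by auto
  qed
  then show ?thesis by auto
qed

lemma E_prod: "E \<alpha> j = (\<Prod>i\<in>{1..j}. \<alpha> i)"
  by (induction j) (auto simp: atLeastAtMostSuc_conv mult.commute)

lemma E_prod_if: "j \<le> m \<Longrightarrow> E \<alpha> j = (\<Prod>i\<in>{1..m}. if i \<le> j then \<alpha> i else 1)"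
proof -
  assume "j \<le> m"
  have "(\<Prod>i\<in>{1..m}. if i \<le> j then \<alpha> i else 1) = (\<Prod>i\<in>{i\<in>{1..m}. i \<le> j}. \<alpha> i)"
    by (simp only: prod.inter_filter[OF finite_atLeastAtMost])
  also have "{i\<in>{1..m}. i \<le> j} = {1..j}" using \<open>j \<le> m\<close> by auto
  finally show ?thesis by (simp add: E_prod)
qed

lemma prod_split_nm: "(\<Prod>i<n+m. F i) = (\<Prod>i<n. F i) * (\<Prod>s<m. F (n + s))" for n m :: nat
proof -
  have u: "{..<n+m} = {..<n} \<union> {n..<n+m}" by auto
  have "(\<Prod>i<n+m. F i) = prod F ({..<n} \<union> {n..<n+m})" by (simp only: u)
  also have "\<dots> = prod F {..<n} * prod F {n..<n+m}" by (rule prod.union_disjoint) auto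
  finally have "(\<Prod>i<n+m. F i) = (\<Prod>i<n. F i) * (\<Prod>i\<in>{n..<n+m}. F i)" .
  also have "(\<Prod>i\<in>{n..<n+m}. F i) = (\<Prod>s<m. F (n + s))"
  proof -
    have "(\<Prod>i\<in>{n..<n+m}. F i) = (\<Prod>i\<in>(\<lambda>s. n + s) ` {..<m}. F i)"
      by (simp add: image_add_atLeastLessThan lessThan_atLeast0 add.commute)
    also have "\<dots> = (\<Prod>s<m. F (n + s))" by (simp add: prod.reindex)
    finally show ?thesis .
  qed
  finally show ?thesis .
qed

lemma sorted_alpha:
  assumes "\<forall>i. 1 \<le> i \<longrightarrow> i < m \<longrightarrow> (\<alpha>::nat\<Rightarrow>'a::linorder) (Suc i) \<le> \<alpha> i"
  shows "1 \<le> i \<Longrightarrow> i \<le> j \<Longrightarrow> j \<le> m \<Longrightarrow> \<alpha> j \<le> \<alpha> i"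
proof (induction j)
  case 0 then show ?case by simp
next
  case (Suc j)
  show ?case
  proof (cases "i = Suc j")
    case True then show ?thesis by simp
  next
    case False
    then have "\<alpha> j \<le> \<alpha> i" using Suc by simp
    moreover have "\<alpha> (Suc j) \<le> \<alpha> j" using assms Suc.prems False by auto
    ultimately show ?thesis by simp
  qed
qed

lemma majorize:
  fixes \<alpha> :: "nat \<Rightarrow> 'g::linordered_ab_group_add trop"
  assumes "\<forall>i. 1 \<le> i \<longrightarrow> i < m \<longrightarrow> \<alpha> (Suc i) \<le> \<alpha> i"
    and "\<forall>J\<le>m. (\<Sum>j\<in>{1..J}. u j) \<le> (\<Sum>j\<in>{1..J}. v j)"
    and "(\<Sum>j\<in>{1..m}. u j) = (\<Sum>j\<in>{1..m}. v j)"
  shows "(\<Prod>j\<in>{1..m}. \<alpha> j ^ u j) \<le> (\<Prod>j\<in>{1..m}. \<alpha> j ^ v j)"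
  using assms
proof (induction m arbitrary: u)
  case 0 then show ?case by simp
next
  case (Suc m)
  show ?case
  proof (cases "m = 0")
    case True
    then show ?thesis using Suc.prems(3) by simp
  next
    case False
    have pm: "(\<Sum>j\<in>{1..m}. u j) \<le> (\<Sum>j\<in>{1..m}. v j)" using Suc.prems(2) by simp
    have tot: "(\<Sum>j\<in>{1..m}. u j) + u (Suc m) = (\<Sum>j\<in>{1..m}. v j) + v (Suc m)"
      using Suc.prems(3) by simp
    then have uv: "v (Suc m) \<le> u (Suc m)" using pm by linarith
    define \<delta> where "\<delta> = u (Suc m) - v (Suc m)"
    define u' where "u' = u(m := u m + \<delta>)"
    have s1: "(\<Sum>j\<in>{1..J}. u' j) = (\<Sum>j\<in>{1..J}. u j)" if "J < m" for J
      using that by (intro sum.cong) (auto simp: u'_def)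
    obtain m' where mm': "m = Suc m'" using False by (cases m) auto
    have s2: "(\<Sum>j\<in>{1..m}. u' j) = (\<Sum>j\<in>{1..m}. u j) + \<delta>"
    proof -
      have "(\<Sum>j\<in>{1..m}. u' j) = u' m + (\<Sum>j\<in>{1..m'}. u' j)"
        "(\<Sum>j\<in>{1..m}. u j) = u m + (\<Sum>j\<in>{1..m'}. u j)" by (simp_all add: mm' atLeastAtMostSuc_conv)
      moreover have "(\<Sum>j\<in>{1..m'}. u' j) = (\<Sum>j\<in>{1..m'}. u j)" using s1[of "m'"] mm' by simp
      ultimately show ?thesis by (simp add: u'_def)
    qed
    have IH: "(\<Prod>j\<in>{1..m}. \<alpha> j ^ u' j) \<le> (\<Prod>j\<in>{1..m}. \<alpha> j ^ v j)"
    proof (rule Suc.IH)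
      show "\<forall>i. 1 \<le> i \<longrightarrow> i < m \<longrightarrow> \<alpha> (Suc i) \<le> \<alpha> i" using Suc.prems(1) by auto
      show "\<forall>J\<le>m. (\<Sum>j\<in>{1..J}. u' j) \<le> (\<Sum>j\<in>{1..J}. v j)"
      proof (intro allI impI)
        fix J assume "J \<le> m"
        show "(\<Sum>j\<in>{1..J}. u' j) \<le> (\<Sum>j\<in>{1..J}. v j)"
        proof (cases "J = m")
          case True then show ?thesis using s2 tot uv by (simp add: \<delta>_def)
        next
          case False
          then show ?thesis using s1[of J] \<open>J \<le> m\<close> Suc.prems(2) by simp
        qed
      qed
      show "(\<Sum>j\<in>{1..m}. u' j) = (\<Sum>j\<in>{1..m}. v j)" using s2 tot uv by (simp add: \<delta>_def)
    qed
    have pu': "(\<Prod>j\<in>{1..m}. \<alpha> j ^ u' j) = (\<Prod>j\<in>{1..m}. \<alpha> j ^ u j) * \<alpha> m ^ \<delta>"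
    proof -
      have "(\<Prod>j\<in>{1..m}. \<alpha> j ^ u' j) = \<alpha> m ^ u' m * (\<Prod>j\<in>{1..m'}. \<alpha> j ^ u' j)"
        "(\<Prod>j\<in>{1..m}. \<alpha> j ^ u j) = \<alpha> m ^ u m * (\<Prod>j\<in>{1..m'}. \<alpha> j ^ u j)" by (simp_all add: mm' atLeastAtMostSuc_conv)
      moreover have "(\<Prod>j\<in>{1..m'}. \<alpha> j ^ u' j) = (\<Prod>j\<in>{1..m'}. \<alpha> j ^ u j)"
        by (intro prod.cong) (auto simp: u'_def mm')
      ultimately show ?thesis by (simp add: u'_def power_add mult_ac)
    qed
    have am: "\<alpha> (Suc m) \<le> \<alpha> m" using Suc.prems(1) False by auto
    have "(\<Prod>j\<in>{1..Suc m}. \<alpha> j ^ u j) = (\<Prod>j\<in>{1..m}. \<alpha> j ^ u j) * \<alpha> (Suc m) ^ \<delta> * \<alpha> (Suc m) ^ v (Suc m)"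
    proof -
      have "\<alpha> (Suc m) ^ u (Suc m) = \<alpha> (Suc m) ^ \<delta> * \<alpha> (Suc m) ^ v (Suc m)"
        using uv by (simp add: \<delta>_def power_add[symmetric])
      then show ?thesis by (simp add: atLeastAtMostSuc_conv mult_ac)
    qed
    also have "\<dots> \<le> (\<Prod>j\<in>{1..m}. \<alpha> j ^ u j) * \<alpha> m ^ \<delta> * \<alpha> (Suc m) ^ v (Suc m)"
      by (intro trop_mult_mono trop_mult_mono' trop_power_mono am)
    also have "\<dots> \<le> (\<Prod>j\<in>{1..m}. \<alpha> j ^ v j) * \<alpha> (Suc m) ^ v (Suc m)"
      using IH pu' by (simp add: trop_mult_mono)
    also have "\<dots> = (\<Prod>j\<in>{1..Suc m}. \<alpha> j ^ v j)" by (simp add: atLeastAtMostSuc_conv mult_ac)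
    finally show ?thesis .
  qed
qed


lemma gauss_ivl: "q \<le> N \<Longrightarrow> 2 * int (\<Sum>{q..<N}) = int (N - q) * (int N + int q - 1)"
proof (induction N)
  case 0 then show ?case by simp
next
  case (Suc N)
  show ?case
  proof (cases "q = Suc N")
    case True then show ?thesis by simp
  next
    case False
    then have qN: "q \<le> N" using Suc.prems by simp
    have "\<Sum>{q..<Suc N} = \<Sum>{q..<N} + N" using qN by simp
    then have "2 * int (\<Sum>{q..<Suc N}) = int (N - q) * (int N + int q - 1) + 2 * int N"
      using Suc.IH[OF qN] by simp
    also have "\<dots> = int (Suc N - q) * (int (Suc N) + int q - 1)"
      using qN by (simp add: of_nat_diff algebra_simps)
    finally show ?thesis .
  qed
qed

lemma comb_total:
  fixes \<sigma> :: "nat \<Rightarrow> nat" and n m :: nat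
  assumes sig: "\<sigma> permutes {..<n+m}"
    and fr: "\<forall>r<n. r \<le> \<sigma> r \<and> \<sigma> r \<le> r + m"
    and gr: "\<forall>s<m. s \<le> \<sigma> (n+s) \<and> \<sigma> (n+s) \<le> s + n"
  shows "(\<Sum>r<n. m + r - \<sigma> r) = (\<Sum>s<m. \<sigma> (n+s) - s)"
proof -
  have perm: "(\<Sum>i<n+m. \<sigma> i) = (\<Sum>i<n+m. i)"
    using sum.reindex_bij_betw[OF permutes_imp_bij[OF sig], of "\<lambda>i. i"] by simp
  have s1: "(\<Sum>i<n+m. \<sigma> i) = (\<Sum>i<n. \<sigma> i) + (\<Sum>s<m. \<sigma> (n + s))"
    and s2: "(\<Sum>i<n+m. i) = (\<Sum>i<n. i) + (\<Sum>s<m. n + s)"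
  proof -
    have u: "{..<n+m} = {..<n} \<union> {n..<n+m}" by auto
    have r: "(\<Sum>i\<in>{n..<n+m}. F i) = (\<Sum>s<m. F (n + s))" for F :: "nat \<Rightarrow> nat"
    proof -
      have "(\<Sum>i\<in>{n..<n+m}. F i) = (\<Sum>i\<in>(\<lambda>s. n + s) ` {..<m}. F i)"
        by (simp add: image_add_atLeastLessThan lessThan_atLeast0 add.commute)
      also have "\<dots> = (\<Sum>s<m. F (n + s))" by (simp add: sum.reindex)
      finally show ?thesis .
    qed
    have d: "(\<Sum>i<n+m. F i) = (\<Sum>i<n. F i) + (\<Sum>i\<in>{n..<n+m}. F i)" for F :: "nat \<Rightarrow> nat"
    proof -
      have "(\<Sum>i<n+m. F i) = sum F ({..<n} \<union> {n..<n+m})" by (simp only: u)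
      also have "\<dots> = sum F {..<n} + sum F {n..<n+m}" by (rule sum.union_disjoint) auto
      finally show ?thesis .
    qed
    show "(\<Sum>i<n+m. \<sigma> i) = (\<Sum>i<n. \<sigma> i) + (\<Sum>s<m. \<sigma> (n + s))" using d[of \<sigma>] r[of \<sigma>] by simp
    show "(\<Sum>i<n+m. i) = (\<Sum>i<n. i) + (\<Sum>s<m. n + s)" using d[of "\<lambda>i. i"] r[of "\<lambda>i. i"] by simp
  qed
  have a: "int (\<Sum>r<n. m + r - \<sigma> r) = (\<Sum>r<n. int m + int r - int (\<sigma> r))"
    unfolding of_nat_sum using fr by (intro sum.cong) (auto simp: of_nat_diff)
  have b: "int (\<Sum>s<m. \<sigma> (n+s) - s) = (\<Sum>s<m. int (\<sigma> (n+s)) - int s)"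
    unfolding of_nat_sum using gr by (intro sum.cong) (auto simp: of_nat_diff)
  have c1: "(\<Sum>r<n. int m + int r - int (\<sigma> r)) = int n * int m + (\<Sum>r<n. int r) - (\<Sum>r<n. int (\<sigma> r))"
    by (simp add: sum.distrib sum_subtractf)
  have c2: "(\<Sum>s<m. int (\<sigma> (n+s)) - int s) = (\<Sum>s<m. int (\<sigma> (n+s))) - (\<Sum>s<m. int s)"
    by (simp add: sum_subtractf)
  have c3: "int (\<Sum>s<m. n + s) = int n * int m + (\<Sum>s<m. int s)"
    by (simp add: sum.distrib)
  have c4: "int (\<Sum>i<n+m. \<sigma> i) = int (\<Sum>i<n. \<sigma> i) + int (\<Sum>s<m. \<sigma> (n + s))"
    using s1 by simp
  have c5: "int (\<Sum>i<n+m. i) = int (\<Sum>i<n. i) + int (\<Sum>s<m. n + s)"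
    using s2 by simp
  have c6: "int (\<Sum>i<n+m. \<sigma> i) = int (\<Sum>i<n+m. i)" using perm by simp
  have e1: "int (\<Sum>i<n. \<sigma> i) = (\<Sum>r<n. int (\<sigma> r))" by simp
  have e2: "int (\<Sum>i<n. i) = (\<Sum>r<n. int r)" by simp
  have e3: "int (\<Sum>s<m. \<sigma> (n + s)) = (\<Sum>s<m. int (\<sigma> (n+s)))" by simp
  have "int (\<Sum>r<n. m + r - \<sigma> r) = int (\<Sum>s<m. \<sigma> (n+s) - s)"
    using a b c1 c2 c3 c4 c5 c6 e1 e2 e3 by linarith
  then show ?thesis by (simp only: of_nat_eq_iff)
qed


lemma comb_prefix:
  fixes \<sigma> :: "nat \<Rightarrow> nat" and n m J :: nat
  assumes sig: "\<sigma> permutes {..<n+m}"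
    and fr: "\<forall>r<n. r \<le> \<sigma> r \<and> \<sigma> r \<le> r + m"
    and gr: "\<forall>s<m. s \<le> \<sigma> (n+s) \<and> \<sigma> (n+s) \<le> s + n"
    and J: "1 \<le> J" "J \<le> m"
  shows "(\<Sum>r<n. min J (m + r - \<sigma> r))
     \<le> (\<Sum>s<m. if card {s'\<in>{..<m}. \<sigma> (n+s) \<le> \<sigma> (n+s')} \<le> J then \<sigma> (n+s) - s else 0)"
proof -
  define col where "col s = \<sigma> (n + s)" for s
  define rk where "rk s = card {s'\<in>{..<m}. col s \<le> col s'}" for s
  have bij: "bij_betw \<sigma> {..<n+m} {..<n+m}" using sig by (rule permutes_imp_bij)
  have injs: "inj_on \<sigma> {..<n+m}" using bij by (simp add: bij_betw_def)
  have injc: "inj_on col {..<m}"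
    unfolding col_def by (rule inj_onI) (use injs in \<open>auto dest: inj_onD\<close>)
  have rkb: "bij_betw rk {..<m} {1..m}"
    using rank_bij[OF finite_lessThan injc] unfolding rk_def card_lessThan .
  define SJ where "SJ = {s\<in>{..<m}. rk s \<le> J}"
  have SJsub: "SJ \<subseteq> {..<m}" by (auto simp: SJ_def)
  have imgSJ: "rk ` SJ = {1..J}"
  proof
    show "rk ` SJ \<subseteq> {1..J}" using rkb J by (auto simp: SJ_def bij_betw_def)
    show "{1..J} \<subseteq> rk ` SJ"
    proof
      fix z assume z: "z \<in> {1..J}"
      then have "z \<in> rk ` {..<m}" using rkb J by (auto simp: bij_betw_def)
      then obtain s where "s < m" "z = rk s" by auto
      then show "z \<in> rk ` SJ" using z by (auto simp: SJ_def)
    qed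
  qed
  have cSJ: "card SJ = J"
  proof -
    have "inj_on rk SJ" using rkb SJsub by (auto simp: bij_betw_def intro: inj_on_subset)
    then have "card SJ = card (rk ` SJ)" by (simp add: card_image)
    then show ?thesis using imgSJ by simp
  qed
  have SJne: "SJ \<noteq> {}" using cSJ J by auto
  have SJfin: "finite SJ" using SJsub finite_subset by blast
  define q where "q = Min (col ` SJ)"
  have "q \<in> col ` SJ" unfolding q_def using SJfin SJne by (intro Min_in) auto
  then obtain s0 where s0: "s0 \<in> SJ" "col s0 = q" by auto
  have rk_anti: "rk s' \<le> rk s" if "s < m" "s' < m" "col s \<le> col s'" for s s'
    unfolding rk_def using that by (intro card_mono) auto
  have claimA: "s \<in> SJ \<longleftrightarrow> q \<le> col s" if "s < m" for s
  proof
    assume "s \<in> SJ" then show "q \<le> col s" using SJfin by (auto simp: q_def)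
  next
    assume "q \<le> col s"
    then have "rk s \<le> rk s0" using rk_anti[of s0 s] s0 SJsub that by auto
    then show "s \<in> SJ" using s0 that by (auto simp: SJ_def)
  qed
  have qN: "q < n + m"
  proof -
    have "n + s0 \<in> {..<n+m}" using s0 SJsub by auto
    then have "\<sigma> (n + s0) \<in> {..<n+m}" using bij by (auto simp: bij_betw_def)
    then show ?thesis using s0 by (simp add: col_def)
  qed
  define Q where "Q = {i\<in>{..<n+m}. q \<le> \<sigma> i}"
  have imgQ: "\<sigma> ` Q = {q..<n+m}"
  proof
    show "\<sigma> ` Q \<subseteq> {q..<n+m}" using bij by (auto simp: Q_def bij_betw_def)
    show "{q..<n+m} \<subseteq> \<sigma> ` Q"
    proof
      fix x assume x: "x \<in> {q..<n+m}"
      then have "x \<in> \<sigma> ` {..<n+m}" using bij by (auto simp: bij_betw_def)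
      then obtain i where "i < n + m" "x = \<sigma> i" by auto
      then show "x \<in> \<sigma> ` Q" using x by (auto simp: Q_def)
    qed
  qed
  have injQ: "inj_on \<sigma> Q" using injs by (auto simp: Q_def intro: inj_on_subset)
  define RP where "RP = {r\<in>{..<n}. q \<le> \<sigma> r}"
  have Qsplit: "Q = RP \<union> (\<lambda>s. n + s) ` SJ"
  proof
    show "Q \<subseteq> RP \<union> (\<lambda>s. n + s) ` SJ"
    proof
      fix i assume i: "i \<in> Q"
      show "i \<in> RP \<union> (\<lambda>s. n + s) ` SJ"
      proof (cases "i < n")
        case True then show ?thesis using i by (auto simp: Q_def RP_def)
      next
        case False
        then have "i - n < m" "q \<le> col (i - n)" using i by (auto simp: Q_def col_def)
        then have "i - n \<in> SJ" using claimA by blast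
        then show ?thesis using False by (auto intro: image_eqI[where x="i - n"])
      qed
    qed
    show "RP \<union> (\<lambda>s. n + s) ` SJ \<subseteq> Q"
      using claimA SJsub by (auto simp: Q_def RP_def col_def)
  qed
  have disj: "RP \<inter> (\<lambda>s. n + s) ` SJ = {}" by (auto simp: RP_def)
  have RPfin: "finite RP" by (simp add: RP_def)
  define p where "p = card RP"
  have cQ: "card Q = n + m - q"
    using card_image[OF injQ] imgQ by simp
  have cQ2: "card Q = p + J"
    unfolding Qsplit p_def using disj RPfin SJfin cSJ
    by (simp add: card_Un_disjoint card_image inj_on_def)
  have sumQ: "(\<Sum>{q..<n+m}) = (\<Sum>r\<in>RP. \<sigma> r) + (\<Sum>s\<in>SJ. col s)"
  proof -
    have "(\<Sum>{q..<n+m}) = (\<Sum>i\<in>Q. \<sigma> i)"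
      using sum.reindex[OF injQ, of "\<lambda>x. x"] imgQ by simp
    also have "\<dots> = (\<Sum>r\<in>RP. \<sigma> r) + (\<Sum>i\<in>(\<lambda>s. n + s) ` SJ. \<sigma> i)"
      unfolding Qsplit using disj RPfin SJfin by (simp add: sum.union_disjoint)
    also have "(\<Sum>i\<in>(\<lambda>s. n + s) ` SJ. \<sigma> i) = (\<Sum>s\<in>SJ. col s)"
      by (simp add: sum.reindex col_def)
    finally show ?thesis .
  qed
  have B1: "(\<Sum>r<n. min J (m + r - \<sigma> r)) \<le> (\<Sum>r\<in>RP. m + r - \<sigma> r) + J * (n - p)"
  proof -
    have RPsub: "RP \<subseteq> {..<n}" by (auto simp: RP_def)
    have "(\<Sum>r<n. min J (m + r - \<sigma> r)) = (\<Sum>r\<in>RP. min J (m + r - \<sigma> r)) + (\<Sum>r\<in>{..<n} - RP. min J (m + r - \<sigma> r))"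
      using RPsub by (simp add: sum.subset_diff)
    also have "(\<Sum>r\<in>RP. min J (m + r - \<sigma> r)) \<le> (\<Sum>r\<in>RP. m + r - \<sigma> r)"
      by (intro sum_mono) auto
    also have "(\<Sum>r\<in>{..<n} - RP. min J (m + r - \<sigma> r)) \<le> (\<Sum>r\<in>{..<n} - RP. J)"
      by (intro sum_mono) auto
    also have "(\<Sum>r\<in>{..<n} - RP. J) = J * (n - p)"
      using RPsub RPfin by (simp add: card_Diff_subset p_def)
    finally show ?thesis by simp
  qed
  have RHS: "(\<Sum>s<m. if card {s'\<in>{..<m}. \<sigma> (n+s) \<le> \<sigma> (n+s')} \<le> J then \<sigma> (n+s) - s else 0)
      = (\<Sum>s\<in>SJ. col s - s)"
    unfolding SJ_def rk_def col_def by (simp only: sum.inter_filter[OF finite_lessThan])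
  define W where "W = int (\<Sum>r\<in>RP. r)"
  define Y where "Y = int (\<Sum>r\<in>RP. \<sigma> r)"
  define X where "X = int (\<Sum>s\<in>SJ. col s)"
  define Z where "Z = int (\<Sum>s\<in>SJ. s)"
  define T where "T = int (\<Sum>{q..<n+m})"
  have i1: "int (\<Sum>r\<in>RP. m + r - \<sigma> r) = int p * int m + W - Y"
  proof -
    have "int (\<Sum>r\<in>RP. m + r - \<sigma> r) = (\<Sum>r\<in>RP. int m + int r - int (\<sigma> r))"
      unfolding of_nat_sum using fr by (intro sum.cong) (auto simp: RP_def of_nat_diff)
    also have "\<dots> = int p * int m + W - Y"
      by (simp add: sum.distrib sum_subtractf W_def Y_def p_def)
    finally show ?thesis .
  qed
  have i2: "int (\<Sum>s\<in>SJ. col s - s) = X - Z"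
  proof -
    have "int (\<Sum>s\<in>SJ. col s - s) = (\<Sum>s\<in>SJ. int (col s) - int s)"
      unfolding of_nat_sum using gr SJsub by (intro sum.cong) (auto simp: col_def of_nat_diff)
    also have "\<dots> = X - Z" by (simp add: sum_subtractf X_def Z_def)
    finally show ?thesis .
  qed
  have i3: "X + Y = T" using sumQ by (simp add: X_def Y_def T_def)
  have i4: "2 * T = int (n + m - q) * (int (n + m) + int q - 1)"
    unfolding T_def using gauss_ivl[of q "n+m"] qN by simp
  have i5: "2 * W \<le> int p * (2 * int n - int p - 1)"
    using sum_distinct_bound[OF RPfin, of n] by (auto simp: W_def p_def RP_def)
  have i6: "2 * Z \<le> int J * (2 * int m - int J - 1)"
    using sum_distinct_bound[OF SJfin SJsub] cSJ by (simp add: Z_def)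
  have i7: "int (n + m - q) = int p + int J" using cQ cQ2 by simp
  have pn: "p \<le> n"
  proof -
    have "card RP \<le> card {..<n}" by (rule card_mono) (auto simp: RP_def)
    then show ?thesis by (simp add: p_def)
  qed
  have i8: "int (J * (n - p)) = int J * int n - int J * int p" using pn by (simp add: of_nat_diff algebra_simps)
  have qv: "int q = int n + int m - int p - int J" using i7 qN by simp
  have iden: "(int p + int J) * (int (n + m) + int q - 1)
      = 2 * (int p * int m) + int p * (2 * int n - int p - 1) + int J * (2 * int m - int J - 1)
        + 2 * (int J * int n) - 2 * (int J * int p)"
    unfolding qv by (simp add: algebra_simps)
  have "int (\<Sum>r<n. min J (m + r - \<sigma> r)) \<le> int (\<Sum>r\<in>RP. m + r - \<sigma> r) + int (J * (n - p))"
    using B1 by linarith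
  also have "\<dots> \<le> X - Z"
  proof -
    have i4': "2 * T = (int p + int J) * (int (n + m) + int q - 1)" using i4 i7 by simp
    show ?thesis using i1 i3 i4' i5 i6 i8 iden by linarith
  qed
  also have "\<dots> = int (\<Sum>s\<in>SJ. col s - s)" using i2 by simp
  finally show ?thesis unfolding RHS by (simp only: of_nat_le_iff)
qed


lemma prod_if_pow: "finite A \<Longrightarrow> (\<Prod>r\<in>A. if P r then c else 1) = c ^ card {r\<in>A. P r}"
proof -
  assume "finite A"
  then have "(\<Prod>r\<in>{r\<in>A. P r}. c) = (\<Prod>r\<in>A. if P r then c else 1)"
    by (simp only: prod.inter_filter)
  then show ?thesis by simp
qed

lemma sum_if_card: "finite A \<Longrightarrow> card {r\<in>A. P r} = (\<Sum>r\<in>A. if P r then 1 else 0)"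
proof -
  assume "finite A"
  then have "(\<Sum>r\<in>{r\<in>A. P r}. (1::nat)) = (\<Sum>r\<in>A. if P r then 1 else 0)"
    by (simp only: sum.inter_filter)
  then show ?thesis by simp
qed

lemma card_min: "card {j\<in>{1..J}. j \<le> k} = min J k"
proof -
  have "{j\<in>{1..J}. j \<le> k} = {1..min J k}" by auto
  then show ?thesis by simp
qed

lemma coeff_le_poly:
  fixes g :: "'g::linordered_ab_group_add trop poly"
  shows "b \<le> degree g \<Longrightarrow> coeff g b * x ^ b \<le> poly g x"
  unfolding poly_altdef by (rule trop_sum_upper) auto

lemma term_upper:
  fixes f g :: "'g::linordered_ab_group_add trop poly" and \<sigma> :: "nat \<Rightarrow> nat"
  assumes m: "degree f = m" and n: "degree g = n" and rs: "rootsys m (coeff f) \<alpha>"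
    and sig: "\<sigma> permutes {..<n+m}"
  shows "(\<Prod>i<n+m. sylvester f g i (\<sigma> i)) \<le> lead_coeff f ^ n * (\<Prod>j\<in>{1..m}. poly g (\<alpha> j))"
proof (cases "(\<Prod>i<n+m. sylvester f g i (\<sigma> i)) = 0")
  case True then show ?thesis by simp
next
  case False
  note rs' = rs[unfolded rootsys_def]
  have nz: "sylvester f g i (\<sigma> i) \<noteq> 0" if "i < n + m" for i
    using False that by (metis finite_lessThan lessThan_iff prod_zero)
  have fr: "\<forall>r<n. r \<le> \<sigma> r \<and> \<sigma> r \<le> r + m"
  proof (intro allI impI)
    fix r assume r: "r < n"
    have "sylvester f g r (\<sigma> r) \<noteq> 0" using nz r by simp
    then have "r \<le> \<sigma> r" "coeff f (\<sigma> r - r) \<noteq> 0" using r n by (auto simp: sylvester_def split: if_splits)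
    then show "r \<le> \<sigma> r \<and> \<sigma> r \<le> r + m" using le_degree m by fastforce
  qed
  have gr: "\<forall>s<m. s \<le> \<sigma> (n+s) \<and> \<sigma> (n+s) \<le> s + n"
  proof (intro allI impI)
    fix s assume s: "s < m"
    have "sylvester f g (n+s) (\<sigma> (n+s)) \<noteq> 0" using nz s by simp
    then have "s \<le> \<sigma> (n+s)" "coeff g (\<sigma> (n+s) - s) \<noteq> 0" using s n by (auto simp: sylvester_def Let_def split: if_splits)
    then show "s \<le> \<sigma> (n+s) \<and> \<sigma> (n+s) \<le> s + n" using le_degree n by fastforce
  qed
  define k where "k r = m + r - \<sigma> r" for r
  define b where "b s = \<sigma> (n+s) - s" for s
  define col where "col s = \<sigma> (n + s)" for s
  define rk where "rk s = card {s'\<in>{..<m}. col s \<le> col s'}" for s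
  have km: "k r \<le> m" if "r < n" for r using fr that by (auto simp: k_def)
  have bn: "b s \<le> n" if "s < m" for s using gr that by (auto simp: b_def)
  have bij: "bij_betw \<sigma> {..<n+m} {..<n+m}" using sig by (rule permutes_imp_bij)
  have injs: "inj_on \<sigma> {..<n+m}" using bij by (simp add: bij_betw_def)
  have injc: "inj_on col {..<m}"
    unfolding col_def by (rule inj_onI) (use injs in \<open>auto dest: inj_onD\<close>)
  have rkb: "bij_betw rk {..<m} {1..m}"
    using rank_bij[OF finite_lessThan injc] unfolding rk_def card_lessThan .
  have rkin: "rk s \<in> {1..m}" if "s < m" for s using rkb that by (auto simp: bij_betw_def)
  have split: "(\<Prod>i<n+m. sylvester f g i (\<sigma> i)) = (\<Prod>r<n. coeff f (\<sigma> r - r)) * (\<Prod>s<m. coeff g (b s))"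
  proof -
    have "(\<Prod>i<n+m. sylvester f g i (\<sigma> i)) = (\<Prod>i<n. sylvester f g i (\<sigma> i)) * (\<Prod>s<m. sylvester f g (n+s) (\<sigma> (n+s)))"
      by (rule prod_split_nm)
    also have "(\<Prod>i<n. sylvester f g i (\<sigma> i)) = (\<Prod>r<n. coeff f (\<sigma> r - r))"
      using fr n by (intro prod.cong) (auto simp: sylvester_def)
    also have "(\<Prod>s<m. sylvester f g (n+s) (\<sigma> (n+s))) = (\<Prod>s<m. coeff g (b s))"
      using gr n by (intro prod.cong) (auto simp: sylvester_def Let_def b_def)
    finally show ?thesis .
  qed
  have Fb: "(\<Prod>r<n. coeff f (\<sigma> r - r)) \<le> lead_coeff f ^ n * (\<Prod>r<n. E \<alpha> (k r))"
  proof -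
    have "(\<Prod>r<n. coeff f (\<sigma> r - r)) \<le> (\<Prod>r<n. coeff f m * E \<alpha> (k r))"
    proof (rule trop_prod_mono)
      fix r assume "r \<in> {..<n}"
      then have r: "r < n" by simp
      have "\<sigma> r - r \<le> m" using fr r by auto
      then have "coeff f (\<sigma> r - r) \<le> coeff f m * E \<alpha> (m - (\<sigma> r - r))" using rs' by blast
      moreover have "m - (\<sigma> r - r) = k r" using fr r by (auto simp: k_def)
      ultimately show "coeff f (\<sigma> r - r) \<le> coeff f m * E \<alpha> (k r)" by simp
    qed
    also have "\<dots> = lead_coeff f ^ n * (\<Prod>r<n. E \<alpha> (k r))"
      by (simp add: prod.distrib m)
    finally show ?thesis .
  qed
  define u where "u j = card {r\<in>{..<n}. j \<le> k r}" for j
  define v where "v j = (\<Sum>s<m. if rk s = j then b s else 0)" for j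
  have Lconv: "(\<Prod>r<n. E \<alpha> (k r)) = (\<Prod>j\<in>{1..m}. \<alpha> j ^ u j)"
  proof -
    have "(\<Prod>r<n. E \<alpha> (k r)) = (\<Prod>r<n. \<Prod>j\<in>{1..m}. if j \<le> k r then \<alpha> j else 1)"
      using km by (intro prod.cong refl E_prod_if) auto
    also have "\<dots> = (\<Prod>j\<in>{1..m}. \<Prod>r<n. if j \<le> k r then \<alpha> j else 1)"
      by (rule prod.swap)
    also have "\<dots> = (\<Prod>j\<in>{1..m}. \<alpha> j ^ u j)"
      unfolding u_def by (intro prod.cong refl prod_if_pow) auto
    finally show ?thesis .
  qed
  have Rconv: "(\<Prod>s<m. \<alpha> (rk s) ^ b s) = (\<Prod>j\<in>{1..m}. \<alpha> j ^ v j)"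
  proof -
    have "(\<Prod>j\<in>{1..m}. \<alpha> j ^ v j) = (\<Prod>j\<in>{1..m}. \<Prod>s<m. if rk s = j then \<alpha> j ^ b s else 1)"
      unfolding v_def power_sum by (intro prod.cong refl) auto
    also have "\<dots> = (\<Prod>s<m. \<Prod>j\<in>{1..m}. if rk s = j then \<alpha> j ^ b s else 1)"
      by (rule prod.swap)
    also have "\<dots> = (\<Prod>s<m. \<alpha> (rk s) ^ b s)"
      using rkin by (intro prod.cong refl) (auto simp: prod.delta')
    finally show ?thesis by simp
  qed
  have usum: "(\<Sum>j\<in>{1..J}. u j) = (\<Sum>r<n. min J (k r))" for J
  proof -
    have "(\<Sum>j\<in>{1..J}. u j) = (\<Sum>j\<in>{1..J}. \<Sum>r<n. if j \<le> k r then 1 else 0)"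
      unfolding u_def by (intro sum.cong refl sum_if_card) auto
    also have "\<dots> = (\<Sum>r<n. \<Sum>j\<in>{1..J}. if j \<le> k r then 1 else 0)" by (rule sum.swap)
    also have "\<dots> = (\<Sum>r<n. min J (k r))"
      using sum_if_card[of "{1..J}" "\<lambda>j. j \<le> k r" for r] card_min by simp
    finally show ?thesis .
  qed
  have vsum: "(\<Sum>j\<in>{1..J}. v j) = (\<Sum>s<m. if rk s \<le> J then b s else 0)" for J
  proof -
    have "(\<Sum>j\<in>{1..J}. v j) = (\<Sum>s<m. \<Sum>j\<in>{1..J}. if rk s = j then b s else 0)"
      unfolding v_def by (rule sum.swap)
    also have "\<dots> = (\<Sum>s<m. if rk s \<le> J then b s else 0)"
      using rkin by (intro sum.cong refl) (auto simp: sum.delta')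
    finally show ?thesis .
  qed
  have tot: "(\<Sum>j\<in>{1..m}. u j) = (\<Sum>j\<in>{1..m}. v j)"
  proof -
    have "(\<Sum>j\<in>{1..m}. u j) = (\<Sum>r<n. k r)" unfolding usum using km by (intro sum.cong) auto
    also have "\<dots> = (\<Sum>s<m. b s)" unfolding k_def b_def by (rule comb_total[OF sig fr gr])
    also have "\<dots> = (\<Sum>j\<in>{1..m}. v j)" unfolding vsum using rkin by (intro sum.cong) auto
    finally show ?thesis .
  qed
  have pre: "\<forall>J\<le>m. (\<Sum>j\<in>{1..J}. u j) \<le> (\<Sum>j\<in>{1..J}. v j)"
  proof (intro allI impI)
    fix J assume J: "J \<le> m"
    show "(\<Sum>j\<in>{1..J}. u j) \<le> (\<Sum>j\<in>{1..J}. v j)"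
    proof (cases "J = 0")
      case True then show ?thesis by simp
    next
      case False
      then show ?thesis unfolding usum vsum k_def b_def rk_def col_def
        using comb_prefix[OF sig fr gr _ J] by simp
    qed
  qed
  have sorted: "\<forall>i. 1 \<le> i \<longrightarrow> i < m \<longrightarrow> \<alpha> (Suc i) \<le> \<alpha> i" using rs' by blast
  have Key: "(\<Prod>r<n. E \<alpha> (k r)) \<le> (\<Prod>s<m. \<alpha> (rk s) ^ b s)"
    unfolding Lconv Rconv by (rule majorize[OF sorted pre tot])
  have Gb: "(\<Prod>s<m. \<alpha> (rk s) ^ b s) * (\<Prod>s<m. coeff g (b s)) \<le> (\<Prod>j\<in>{1..m}. poly g (\<alpha> j))"
  proof -
    have "(\<Prod>s<m. \<alpha> (rk s) ^ b s) * (\<Prod>s<m. coeff g (b s)) = (\<Prod>s<m. coeff g (b s) * \<alpha> (rk s) ^ b s)"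
      by (simp add: prod.distrib mult.commute)
    also have "\<dots> \<le> (\<Prod>s<m. poly g (\<alpha> (rk s)))"
      by (rule trop_prod_mono) (use bn n in \<open>auto intro: coeff_le_poly\<close>)
    also have "\<dots> = (\<Prod>j\<in>{1..m}. poly g (\<alpha> j))"
      by (rule prod.reindex_bij_betw[OF rkb])
    finally show ?thesis .
  qed
  have "(\<Prod>i<n+m. sylvester f g i (\<sigma> i)) \<le> lead_coeff f ^ n * (\<Prod>r<n. E \<alpha> (k r)) * (\<Prod>s<m. coeff g (b s))"
    unfolding split by (rule trop_mult_mono[OF Fb])
  also have "\<dots> \<le> lead_coeff f ^ n * (\<Prod>s<m. \<alpha> (rk s) ^ b s) * (\<Prod>s<m. coeff g (b s))"
    by (intro trop_mult_mono trop_mult_mono' Key)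
  also have "\<dots> \<le> lead_coeff f ^ n * (\<Prod>j\<in>{1..m}. poly g (\<alpha> j))"
    using trop_mult_mono'[OF Gb, of "lead_coeff f ^ n"] by (simp add: mult.assoc)
  finally show ?thesis .
qed


definition kappa :: "'g::linordered_ab_group_add trop poly \<Rightarrow> 'g trop \<Rightarrow> nat" where
  "kappa g x = (GREATEST j. j \<le> degree g \<and> coeff g j * x ^ j = poly g x)"

lemma kappa_props:
  fixes g :: "'g::linordered_ab_group_add trop poly"
  shows "kappa g x \<le> degree g \<and> coeff g (kappa g x) * x ^ (kappa g x) = poly g x"
    and "j \<le> degree g \<Longrightarrow> coeff g j * x ^ j = poly g x \<Longrightarrow> j \<le> kappa g x"
proof -
  obtain j0 where j0: "j0 \<in> {..degree g}" "poly g x = coeff g j0 * x ^ j0"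
    using trop_sum_attained[of "{..degree g}" "\<lambda>i. coeff g i * x ^ i"] unfolding poly_altdef by auto
  have ex: "j0 \<le> degree g \<and> coeff g j0 * x ^ j0 = poly g x" using j0 by simp
  have bnd: "\<forall>y. y \<le> degree g \<and> coeff g y * x ^ y = poly g x \<longrightarrow> y \<le> degree g" by simp
  show "kappa g x \<le> degree g \<and> coeff g (kappa g x) * x ^ (kappa g x) = poly g x"
    unfolding kappa_def
    by (rule GreatestI_nat[where P="\<lambda>j. j \<le> degree g \<and> coeff g j * x ^ j = poly g x", OF ex]) auto
  show "j \<le> degree g \<Longrightarrow> coeff g j * x ^ j = poly g x \<Longrightarrow> j \<le> kappa g x"
    unfolding kappa_def by (rule Greatest_le_nat[where b="degree g"]) auto
qed

lemma kappa_zero: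
  fixes g :: "'g::linordered_ab_group_add trop poly"
  assumes "poly g 0 \<noteq> 0"
  shows "kappa g 0 = 0"
proof (rule ccontr)
  assume "kappa g 0 \<noteq> 0"
  then have "coeff g (kappa g 0) * 0 ^ (kappa g 0) = 0" by simp
  then show False using kappa_props(1)[of g 0] assms by simp
qed

lemma kappa_mono:
  fixes g :: "'g::linordered_ab_group_add trop poly"
  assumes xy: "x \<le> y" and px: "poly g x \<noteq> 0" and py: "poly g y \<noteq> 0"
  shows "kappa g x \<le> kappa g y"
proof (rule ccontr)
  assume "\<not> kappa g x \<le> kappa g y"
  then have lt: "kappa g y < kappa g x" by simp
  define j where "j = kappa g x"
  define j' where "j' = kappa g y"
  define G where "G = coeff g"
  have hx: "G j * x ^ j = poly g x" and jn: "j \<le> degree g" using kappa_props(1)[of g x] by (auto simp: j_def G_def)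
  have hy: "G j' * y ^ j' = poly g y" and j'n: "j' \<le> degree g" using kappa_props(1)[of g y] by (auto simp: j'_def G_def)
  have i1: "G j' * x ^ j' \<le> G j * x ^ j" using hx coeff_le_poly[OF j'n, of x] by (simp add: G_def)
  have i2: "G j * y ^ j \<le> G j' * y ^ j'" using hy coeff_le_poly[OF jn, of y] by (simp add: G_def)
  define \<delta> where "\<delta> = j - j'"
  have jd: "j = j' + \<delta>" and d0: "\<delta> > 0" using lt by (auto simp: \<delta>_def j_def j'_def)
  have "G j * x ^ j \<noteq> 0" using hx px by simp
  then have Gj: "G j \<noteq> 0" and xj: "x ^ j \<noteq> 0" by auto
  have xnz: "x \<noteq> 0" using xj d0 jd by (auto simp: power_add)
  have "G j' * y ^ j' \<noteq> 0" using hy py by simp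
  then have Gj': "G j' \<noteq> 0" and yj': "y ^ j' \<noteq> 0" by auto
  define C where "C = G j * G j' * x ^ j' * y ^ j'"
  have Cnz: "C \<noteq> 0" using Gj Gj' yj' xnz by (simp add: C_def)
  have "(G j' * x ^ j') * (G j * y ^ j) \<le> (G j * x ^ j) * (G j' * y ^ j')"
    by (rule trop_mult_mono2[OF i1 i2])
  then have "y ^ \<delta> * C \<le> x ^ \<delta> * C"
    by (simp add: C_def jd power_add mult_ac)
  then have "y ^ \<delta> \<le> x ^ \<delta>" using trop_mult_cancel Cnz by blast
  then have "y \<le> x" using trop_power_cancel d0 by blast
  then have "x = y" using xy by simp
  then have "j \<le> kappa g y" using kappa_props(2)[OF jn] hx by (simp add: G_def)
  then show False using lt by (simp add: j_def)
qed


lemma E_as_prod_if: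
  assumes "a \<le> m"
  shows "E \<alpha> (m - a) = (\<Prod>s<m. if a \<le> s then \<alpha> (m - s) else 1)"
proof -
  have "E \<alpha> (m - a) = (\<Prod>i\<in>{1..m - a}. \<alpha> i)" by (rule E_prod)
  also have "{1..m - a} = (\<lambda>s. m - s) ` {a..<m}"
  proof
    show "{1..m - a} \<subseteq> (\<lambda>s. m - s) ` {a..<m}"
    proof
      fix i assume i: "i \<in> {1..m - a}"
      then have "i = m - (m - i)" "m - i \<in> {a..<m}" using assms by auto
      then show "i \<in> (\<lambda>s. m - s) ` {a..<m}" by blast
    qed
    show "(\<lambda>s. m - s) ` {a..<m} \<subseteq> {1..m - a}" by auto
  qed
  also have "(\<Prod>i\<in>(\<lambda>s. m - s) ` {a..<m}. \<alpha> i) = (\<Prod>s\<in>{a..<m}. \<alpha> (m - s))"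
    by (subst prod.reindex) (auto simp: inj_on_def)
  also have "{a..<m} = {s\<in>{..<m}. a \<le> s}" by auto
  also have "(\<Prod>s\<in>{s\<in>{..<m}. a \<le> s}. \<alpha> (m - s)) = (\<Prod>s<m. if a \<le> s then \<alpha> (m - s) else 1)"
    by (simp only: prod.inter_filter[OF finite_lessThan])
  finally show ?thesis .
qed

lemma term_lower:
  fixes f g :: "'g::linordered_ab_group_add trop poly"
  assumes m: "degree f = m" and n: "degree g = n" and rs: "rootsys m (coeff f) \<alpha>"
  shows "\<exists>\<sigma>. \<sigma> permutes {..<n+m} \<and>
     lead_coeff f ^ n * (\<Prod>j\<in>{1..m}. poly g (\<alpha> j)) \<le> (\<Prod>i<n+m. sylvester f g i (\<sigma> i))"
proof (cases "(\<Prod>j\<in>{1..m}. poly g (\<alpha> j)) = 0")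
  case True
  then show ?thesis using permutes_id by fastforce
next
  case False
  note rs' = rs[unfolded rootsys_def]
  have pnz: "poly g (\<alpha> j) \<noteq> 0" if "j \<in> {1..m}" for j
    using False that by (metis finite_atLeastAtMost prod_zero)
  have sorted: "\<forall>i. 1 \<le> i \<longrightarrow> i < m \<longrightarrow> \<alpha> (Suc i) \<le> \<alpha> i" using rs' by blast
  define k where "k s = kappa g (\<alpha> (m - s))" for s
  have kn: "k s \<le> n" for s using kappa_props(1)[of g "\<alpha> (m - s)"] n by (simp add: k_def)
  have kmono: "k s \<le> k s'" if "s \<le> s'" "s' < m" for s s'
  proof -
    have "\<alpha> (m - s) \<le> \<alpha> (m - s')" using sorted_alpha[OF sorted, of "m - s'" "m - s"] that by auto
    moreover have "poly g (\<alpha> (m - s)) \<noteq> 0" "poly g (\<alpha> (m - s')) \<noteq> 0" using pnz that by auto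
    ultimately show ?thesis unfolding k_def by (rule kappa_mono)
  qed
  define a where "a r = card {s\<in>{..<m}. k s \<le> r}" for r
  have Dr: "{s\<in>{..<m}. k s \<le> r} = {..<a r}" for r
    unfolding a_def
  proof (rule downclosed_eq)
    show "finite {s \<in> {..<m}. k s \<le> r}" by simp
    fix x y assume "x \<in> {s \<in> {..<m}. k s \<le> r}" "y \<le> x"
    then show "y \<in> {s \<in> {..<m}. k s \<le> r}" using kmono[of y x] by auto
  qed
  have am: "a r \<le> m" for r
  proof -
    have "card {s\<in>{..<m}. k s \<le> r} \<le> card {..<m}" by (rule card_mono) auto
    then show ?thesis by (simp add: a_def)
  qed
  have aiff: "s < a r \<longleftrightarrow> k s \<le> r" if "s < m" for s r
  proof -
    have "s \<in> {s\<in>{..<m}. k s \<le> r} \<longleftrightarrow> s \<in> {..<a r}" using Dr by simp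
    then show ?thesis using that by auto
  qed
  have amono: "a r \<le> a r'" if "r \<le> r'" for r r'
  proof -
    have "card {s\<in>{..<m}. k s \<le> r} \<le> card {s\<in>{..<m}. k s \<le> r'}" using that by (intro card_mono) auto
    then show ?thesis by (simp add: a_def)
  qed
  define \<sigma> where "\<sigma> i = (if i < n then i + a i else if i < n + m then (i - n) + k (i - n) else i)" for i
  have into: "\<sigma> ` {..<n+m} \<subseteq> {..<n+m}"
  proof
    fix x assume "x \<in> \<sigma> ` {..<n+m}"
    then obtain i where i: "i < n + m" "x = \<sigma> i" by auto
    show "x \<in> {..<n+m}"
    proof (cases "i < n")
      case True then show ?thesis using i am[of i] by (auto simp: \<sigma>_def)
    next
      case False then show ?thesis using i kn[of "i - n"] by (auto simp: \<sigma>_def)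
    qed
  qed
  have cross: "r + a r \<noteq> s + k s" if "r < n" "s < m" for r s
  proof (cases "k s \<le> r")
    case True
    then have "s < a r" using aiff that by simp
    then show ?thesis using True by simp
  next
    case False
    then have "a r \<le> s" using aiff that by (meson not_le)
    then show ?thesis using False by simp
  qed
  have smf: "\<sigma> i < \<sigma> j" if "i < j" "j < n" for i j
  proof -
    have "a i \<le> a j" using amono that by simp
    then show ?thesis using that by (simp add: \<sigma>_def)
  qed
  have smg: "\<sigma> i < \<sigma> j" if "n \<le> i" "i < j" "j < n + m" for i j
  proof -
    have "k (i - n) \<le> k (j - n)" using kmono that by simp
    then show ?thesis using that by (simp add: \<sigma>_def)
  qed
  have inj: "inj_on \<sigma> {..<n+m}"
  proof (rule inj_onI, rule ccontr)
    fix i j assume i: "i \<in> {..<n+m}" and j: "j \<in> {..<n+m}" and eq: "\<sigma> i = \<sigma> j" and ne: "i \<noteq> j"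
    show False
    proof (cases "i < n"; cases "j < n")
      assume "i < n" "j < n"
      then show False using eq ne smf[of i j] smf[of j i] by (cases "i < j") auto
    next
      assume a1: "i < n" "\<not> j < n"
      then have "j - n < m" "\<sigma> j = (j - n) + k (j - n)" "\<sigma> i = i + a i" using j by (auto simp: \<sigma>_def)
      then show False using eq cross[of i "j - n"] a1 by simp
    next
      assume a1: "\<not> i < n" "j < n"
      then have "i - n < m" "\<sigma> i = (i - n) + k (i - n)" "\<sigma> j = j + a j" using i by (auto simp: \<sigma>_def)
      then show False using eq cross[of j "i - n"] a1 by simp
    next
      assume "\<not> i < n" "\<not> j < n"
      then show False using eq ne smg[of i j] smg[of j i] i j by (cases "i < j") auto
    qed
  qed
  have sig: "\<sigma> permutes {..<n+m}"
  proof (rule bij_imp_permutes)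
    have "\<sigma> ` {..<n+m} = {..<n+m}" using endo_inj_surj[OF finite_lessThan into inj] .
    then show "bij_betw \<sigma> {..<n+m} {..<n+m}" using inj by (simp add: bij_betw_def)
    show "\<sigma> x = x" if "x \<notin> {..<n+m}" for x using that by (auto simp: \<sigma>_def)
  qed
  have split: "(\<Prod>i<n+m. sylvester f g i (\<sigma> i)) = (\<Prod>r<n. coeff f (a r)) * (\<Prod>s<m. coeff g (k s))"
  proof -
    have "(\<Prod>i<n+m. sylvester f g i (\<sigma> i)) = (\<Prod>i<n. sylvester f g i (\<sigma> i)) * (\<Prod>s<m. sylvester f g (n+s) (\<sigma> (n+s)))"
      by (rule prod_split_nm)
    also have "(\<Prod>i<n. sylvester f g i (\<sigma> i)) = (\<Prod>r<n. coeff f (a r))"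
      using n by (intro prod.cong) (auto simp: sylvester_def \<sigma>_def)
    also have "(\<Prod>s<m. sylvester f g (n+s) (\<sigma> (n+s))) = (\<Prod>s<m. coeff g (k s))"
      using n by (intro prod.cong) (auto simp: sylvester_def Let_def \<sigma>_def)
    finally show ?thesis .
  qed
  have fval: "coeff f (a r) = coeff f m * E \<alpha> (m - a r)" if "r < n" for r
  proof -
    have pre: "a r = m \<or> \<alpha> (m - a r) \<noteq> \<alpha> (Suc (m - a r))"
    proof (cases "a r < m")
      case False then show ?thesis using am[of r] by simp
    next
      case True
      have kar: "r < k (a r)" using aiff[OF True, of r] by simp
      show ?thesis
      proof (cases "a r = 0")
        case True
        have "\<alpha> m \<noteq> 0"
        proof
          assume a0: "\<alpha> m = 0"
          have "poly g (\<alpha> m) \<noteq> 0" using pnz \<open>a r < m\<close> by auto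
          then have "kappa g 0 = 0" using a0 by (intro kappa_zero) simp
          then have "k 0 = 0" using a0 by (simp add: k_def)
          then show False using kar True by simp
        qed
        then show ?thesis using rs' True by simp
      next
        case False
        have "k (a r - 1) \<le> r" using aiff[of "a r - 1" r] False \<open>a r < m\<close> by simp
        then have kne: "k (a r - 1) \<noteq> k (a r)" using kar by simp
        have "Suc (m - a r) = m - (a r - 1)" using False \<open>a r < m\<close> by simp
        then show ?thesis using kne by (auto simp: k_def)
      qed
    qed
    then show ?thesis using rs' am[of r] by blast
  qed
  have ident: "(\<Prod>r<n. E \<alpha> (m - a r)) = (\<Prod>s<m. \<alpha> (m - s) ^ k s)"
  proof -
    have "(\<Prod>r<n. E \<alpha> (m - a r)) = (\<Prod>r<n. \<Prod>s<m. if a r \<le> s then \<alpha> (m - s) else 1)"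
      using am by (intro prod.cong refl E_as_prod_if) auto
    also have "\<dots> = (\<Prod>s<m. \<Prod>r<n. if a r \<le> s then \<alpha> (m - s) else 1)" by (rule prod.swap)
    also have "\<dots> = (\<Prod>s<m. \<alpha> (m - s) ^ card {r\<in>{..<n}. a r \<le> s})"
      by (intro prod.cong refl prod_if_pow) auto
    also have "\<dots> = (\<Prod>s<m. \<alpha> (m - s) ^ k s)"
    proof (intro prod.cong refl)
      fix s assume s: "s \<in> {..<m}"
      have "{r\<in>{..<n}. a r \<le> s} = {..<k s}"
      proof -
        have sm: "s < m" using s by simp
        have iff: "a r \<le> s \<longleftrightarrow> r < k s" for r using aiff[OF sm, of r] not_le by blast
        have "k s \<le> n" by (rule kn)
        then show ?thesis unfolding iff by auto
      qed
      then show "\<alpha> (m - s) ^ card {r\<in>{..<n}. a r \<le> s} = \<alpha> (m - s) ^ k s" by simp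
    qed
    finally show ?thesis .
  qed
  have reidx: "(\<Prod>s<m. poly g (\<alpha> (m - s))) = (\<Prod>j\<in>{1..m}. poly g (\<alpha> j))"
  proof (rule prod.reindex_bij_betw)
    show "bij_betw (\<lambda>s. m - s) {..<m} {1..m}"
    proof (rule bij_betw_byWitness[where f'="\<lambda>j. m - j"])
      show "\<forall>a\<in>{..<m}. m - (m - a) = a" by auto
      show "\<forall>a\<in>{1..m}. m - (m - a) = a" by auto
      show "(\<lambda>s. m - s) ` {..<m} \<subseteq> {1..m}" by auto
      show "(\<lambda>j. m - j) ` {1..m} \<subseteq> {..<m}" by auto
    qed
  qed
  have "(\<Prod>i<n+m. sylvester f g i (\<sigma> i)) = lead_coeff f ^ n * (\<Prod>j\<in>{1..m}. poly g (\<alpha> j))"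
  proof -
    have "(\<Prod>r<n. coeff f (a r)) = (\<Prod>r<n. coeff f m * E \<alpha> (m - a r))"
      using fval by (intro prod.cong) auto
    also have "\<dots> = lead_coeff f ^ n * (\<Prod>s<m. \<alpha> (m - s) ^ k s)"
      by (simp add: prod.distrib ident m)
    finally have "(\<Prod>i<n+m. sylvester f g i (\<sigma> i))
        = lead_coeff f ^ n * ((\<Prod>s<m. \<alpha> (m - s) ^ k s) * (\<Prod>s<m. coeff g (k s)))"
      unfolding split by (simp add: mult.assoc)
    also have "(\<Prod>s<m. \<alpha> (m - s) ^ k s) * (\<Prod>s<m. coeff g (k s)) = (\<Prod>s<m. poly g (\<alpha> (m - s)))"
      unfolding prod.distrib[symmetric]
      by (intro prod.cong refl) (simp add: k_def kappa_props(1) mult.commute)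
    finally show ?thesis using reidx by simp
  qed
  then show ?thesis using sig by (intro exI[of _ \<sigma>]) simp
qed


lemma poisson:
  fixes f g :: "'g::linordered_ab_group_add trop poly"
  assumes fnz: "f \<noteq> 0" and rs: "rootsys (degree f) (coeff f) \<alpha>"
  shows "layered_resultant f g = lead_coeff f ^ degree g * (\<Prod>j\<in>{1..degree f}. poly g (\<alpha> j))"
proof -
  define m where "m = degree f"
  define n where "n = degree g"
  show ?thesis
  proof (cases "m = 0")
    case True
    then show ?thesis by (simp add: layered_resultant_def m_def)
  next
    case False
    show ?thesis
    proof (cases "n = 0")
      case True
      have pg: "poly g x = coeff g 0" for x
        unfolding poly_altdef using True by (simp add: n_def)
      then show ?thesis using True False by (simp add: layered_resultant_def m_def n_def)
    next
      case False2: False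
      have res: "layered_resultant f g = permanent (n + m) (sylvester f g)"
        using False False2 by (simp add: layered_resultant_def m_def n_def add.commute)
      let ?R = "lead_coeff f ^ n * (\<Prod>j\<in>{1..m}. poly g (\<alpha> j))"
      have rs': "rootsys m (coeff f) \<alpha>" using rs by (simp add: m_def)
      have le: "permanent (n + m) (sylvester f g) \<le> ?R"
        unfolding permanent_def
      proof (rule trop_sum_least)
        fix \<sigma> assume "\<sigma> \<in> {\<sigma>. \<sigma> permutes {..<n + m}}"
        then show "(\<Prod>i<n + m. sylvester f g i (\<sigma> i)) \<le> ?R"
          using term_upper[OF m_def[symmetric] n_def[symmetric] rs', of \<sigma>] by simp
      qed
      obtain \<sigma> where sig: "\<sigma> permutes {..<n+m}"
        and ge1: "?R \<le> (\<Prod>i<n+m. sylvester f g i (\<sigma> i))"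
        using term_lower[OF m_def[symmetric] n_def[symmetric] rs'] by blast
      have "(\<Prod>i<n+m. sylvester f g i (\<sigma> i)) \<le> permanent (n + m) (sylvester f g)"
        unfolding permanent_def
        by (rule trop_sum_upper[where f="\<lambda>\<sigma>. \<Prod>i<n+m. sylvester f g i (\<sigma> i)"])
           (use sig finite_permutations in auto)
      then have "?R \<le> permanent (n + m) (sylvester f g)" using ge1 by simp
      then show ?thesis using le res by (simp add: m_def n_def)
    qed
  qed
qed

lemma trop_res_mult:
  fixes f g h :: "'g::linordered_ab_group_add trop poly"
  assumes fnz: "f \<noteq> 0" and gnz: "g \<noteq> 0" and hnz: "h \<noteq> 0"
  shows "layered_resultant f (g * h) = layered_resultant f g * layered_resultant f h"
proof -
  define m where "m = degree f"
  define d :: nat where "d = fact m"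
  have d0: "(d::nat) > 0" by (simp add: d_def)
  define \<psi> where "\<psi> = (\<lambda>a::'g trop. a ^ d)"
  interpret P: srhom \<psi> unfolding \<psi>_def by (rule psi_hom[OF d0])
  define F where "F = map_poly \<psi> f"
  define G where "G = map_poly \<psi> g"
  define H where "H = map_poly \<psi> h"
  have Fnz: "F \<noteq> 0" and Gnz: "G \<noteq> 0" and Hnz: "H \<noteq> 0"
    using P.hpoly_nz fnz gnz hnz by (auto simp: F_def G_def H_def)
  have degF: "degree F = m" by (simp add: F_def P.hdegree m_def)
  obtain \<alpha> where rs: "rootsys m (coeff F) \<alpha>"
  proof -
    have "\<exists>\<alpha>. rootsys m (coeff F) \<alpha>"
    proof (rule roots_exist[OF _ d0])
      show "coeff F m \<noteq> 0" using Fnz degF by (metis leading_coeff_0_iff)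
      show "\<forall>k\<in>{1..m}. k dvd d" by (auto simp: d_def dvd_fact)
      show "\<forall>a. \<exists>y. coeff F a = y ^ d"
      proof
        fix a
        have "coeff F a = \<psi> (coeff f a)" unfolding F_def by (rule P.hcoeff)
        then show "\<exists>y. coeff F a = y ^ d" unfolding \<psi>_def by blast
      qed
    qed
    then show ?thesis using that by blast
  qed
  have rsF: "rootsys (degree F) (coeff F) \<alpha>" using rs degF by simp
  have GH: "map_poly \<psi> (g * h) = G * H" by (simp add: G_def H_def P.hpoly_mult)
  have "\<psi> (layered_resultant f (g * h)) = layered_resultant F (G * H)"
    unfolding P.hresultant[symmetric] F_def GH ..
  also have "\<dots> = lead_coeff F ^ degree (G * H) * (\<Prod>j\<in>{1..degree F}. poly (G * H) (\<alpha> j))"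
    by (rule poisson[OF Fnz rsF])
  also have "\<dots> = (lead_coeff F ^ degree G * (\<Prod>j\<in>{1..degree F}. poly G (\<alpha> j)))
                 * (lead_coeff F ^ degree H * (\<Prod>j\<in>{1..degree F}. poly H (\<alpha> j)))"
    using Gnz Hnz by (simp add: degree_mult_eq power_add prod.distrib mult_ac)
  also have "\<dots> = layered_resultant F G * layered_resultant F H"
    using poisson[OF Fnz rsF, of G] poisson[OF Fnz rsF, of H] by simp
  also have "\<dots> = \<psi> (layered_resultant f g) * \<psi> (layered_resultant f h)"
    by (simp add: F_def G_def H_def P.hresultant)
  also have "\<dots> = \<psi> (layered_resultant f g * layered_resultant f h)" by (simp add: P.hmul)
  finally show ?thesis using trop_power_inj[OF d0] by (simp add: \<psi>_def)
qed

theorem theorem8p25: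
  fixes f g h :: "('g::linordered_ab_group_add, 'l::lin_ord_comm_semiring_1) layered poly"
  assumes "f \<noteq> 0" and "g \<noteq> 0" and "h \<noteq> 0"
  shows "layered_resultant f (g * h) \<cong>\<^sub>\<nu> layered_resultant f g * layered_resultant f h
         \<and> layered_resultant (f * g) h \<cong>\<^sub>\<nu> layered_resultant f h * layered_resultant g h"
proof -
  interpret Q: srhom "phi :: ('g, 'l) layered \<Rightarrow> 'g trop" by (rule phi_hom)
  define F where "F = map_poly phi f"
  define G where "G = map_poly phi g"
  define H where "H = map_poly phi h"
  have nz: "F \<noteq> 0" "G \<noteq> 0" "H \<noteq> 0"
    using Q.hpoly_nz assms by (auto simp: F_def G_def H_def)
  have 1: "phi (layered_resultant f (g * h)) = phi (layered_resultant f g * layered_resultant f h)"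
  proof -
    have "phi (layered_resultant f (g * h)) = layered_resultant F (G * H)"
      by (simp add: Q.hresultant[symmetric] Q.hpoly_mult F_def G_def H_def)
    also have "\<dots> = layered_resultant F G * layered_resultant F H"
      by (rule trop_res_mult[OF nz])
    also have "\<dots> = phi (layered_resultant f g * layered_resultant f h)"
      by (simp add: Q.hresultant[symmetric] Q.hmul F_def G_def H_def)
    finally show ?thesis .
  qed
  have 2: "phi (layered_resultant (f * g) h) = phi (layered_resultant f h * layered_resultant g h)"
  proof -
    have "phi (layered_resultant (f * g) h) = layered_resultant (F * G) H"
      by (simp add: Q.hresultant[symmetric] Q.hpoly_mult F_def G_def H_def)
    also have "\<dots> = layered_resultant H (F * G)" by (rule resultant_sym)
    also have "\<dots> = layered_resultant H F * layered_resultant H G"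
      by (rule trop_res_mult) (use nz in auto)
    also have "\<dots> = layered_resultant F H * layered_resultant G H"
      by (simp add: resultant_sym[of H])
    also have "\<dots> = phi (layered_resultant f h * layered_resultant g h)"
      by (simp add: Q.hresultant[symmetric] Q.hmul F_def G_def H_def)
    finally show ?thesis .
  qed
  show ?thesis using 1 2 by (simp add: nu_equiv_phi)
qed

end
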